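(* Let $s\le L$ be positive integers, $\mathbf{D}\in\mathbb{R}^{N\times N}$, $\mathbf{H}\in\mathbb{R}^{N\times L}$, and consider the system $\mathbf{x}_k=\mathbf{D}\mathbf{x}_{k-1}+\mathbf{H}\mathbf{h}_k$ with inputs satisfying $\|\mathbf{h}_k\|_0\le s$. Suppose the system is $s$-sparse-controllable. Let $K^*$ be the minimum number of $s$-sparse input vectors required to steer the system from any given state to any other state, i.e. the smallest $K$ such that for all $\mathbf{x}_0,\mathbf{x}_{\mathrm{final}}\in\mathbb{R}^N$ there exist $\mathbf{h}_1,\dots,\mathbf{h}_K$ with $\|\mathbf{h}_k\|_0\le s$ and $\mathbf{x}_K=\mathbf{x}_{\mathrm{final}}$. Then $$\frac{N}{R^*_{\mathbf{H},s}}\le K^*\le\min\left\{q\left\lceil\frac{S^*}{s}\right\rceil,\ N-R^*_{\mathbf{H},s}+1\right\}\le N,$$ where $q$ is the degree of the minimal polynomial of $\mathbf{D}$, $R^*_{\mathbf{H},s}=\min\{\operatorname{rank}(\mathbf{H}),s\}$, and $$S^*=\min\Big\{|\mathcal{S}|:\ \mathcal{S}\subseteq\{1,\dots,L\},\ \operatorname{rank}\begin{bmatrix}\mathbf{D}-\lambda\mathbf{I} & \mathbf{H}_{\mathcal{S}}\end{bmatrix}=N\ \text{for all }\lambda\in\mathbb{C}\Big\}.$$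
   Context: $\|\cdot\|_0$ denotes the number of nonzero entries; $\mathbf{H}_{\mathcal{S}}$ is the submatrix of $\mathbf{H}$ formed by the columns indexed by $\mathcal{S}$. The system is $s$-sparse-controllable if for every initial state $\mathbf{x}_0\in\mathbb{R}^N$ and every final state $\mathbf{x}_{\mathrm{final}}\in\mathbb{R}^N$ there exist a finite $K$ and inputs $\mathbf{h}_1,\dots,\mathbf{h}_K$ with $\|\mathbf{h}_k\|_0\le s$ steering the system from $\mathbf{x}_0$ to $\mathbf{x}_K=\mathbf{x}_{\mathrm{final}}$. *)

theory Defs
  imports "HOL-Analysis.Analysis" "HOL-Computational_Algebra.Polynomial"
begin

text \<open>Number of nonzero entries of a vector (the l0 "norm").\<close>
definition l0 :: "'a::zero^'l \<Rightarrow> nat" where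
  "l0 h = card {j. h $ j \<noteq> 0}"

text \<open>State of x_k = D x_(k-1) + H h_k after k steps, starting from x0 (inputs h 1, h 2, ...).\<close>
fun traj :: "real^'n^'n \<Rightarrow> real^'l^'n \<Rightarrow> real^'n \<Rightarrow> (nat \<Rightarrow> real^'l) \<Rightarrow> nat \<Rightarrow> real^'n" where
  "traj D H x0 h 0 = x0"
| "traj D H x0 h (Suc k) = D *v traj D H x0 h k + H *v h (Suc k)"

text \<open>Steering from every state to every state is possible in exactly K s-sparse inputs.\<close>
definition steerable_in :: "real^'n^'n \<Rightarrow> real^'l^'n \<Rightarrow> nat \<Rightarrow> nat \<Rightarrow> bool" where
  "steerable_in D H s K \<longleftrightarrow>
     (\<forall>x0 xf. \<exists>h. (\<forall>k\<in>{1..K}. l0 (h k) \<le> s) \<and> traj D H x0 h K = xf)"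

definition sparse_controllable :: "real^'n^'n \<Rightarrow> real^'l^'n \<Rightarrow> nat \<Rightarrow> bool" where
  "sparse_controllable D H s \<longleftrightarrow>
     (\<forall>x0 xf. \<exists>K h. (\<forall>k\<in>{1..K}. l0 (h k) \<le> s) \<and> traj D H x0 h K = xf)"

definition Kstar :: "real^'n^'n \<Rightarrow> real^'l^'n \<Rightarrow> nat \<Rightarrow> nat" where
  "Kstar D H s = (LEAST K. steerable_in D H s K)"

fun mat_pow :: "'a::comm_ring_1^'n^'n \<Rightarrow> nat \<Rightarrow> 'a^'n^'n" where
  "mat_pow A 0 = mat 1"
| "mat_pow A (Suc k) = A ** mat_pow A k"

definition poly_mat :: "'a::comm_ring_1 poly \<Rightarrow> 'a^'n^'n \<Rightarrow> 'a^'n^'n" where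
  "poly_mat p A = (\<Sum>i\<le>degree p. mat (coeff p i) ** mat_pow A i)"

text \<open>Degree of the minimal polynomial (monic annihilating polynomial of least degree).\<close>
definition min_poly_degree :: "real^'n^'n \<Rightarrow> nat" where
  "min_poly_degree D = (LEAST d. \<exists>p::real poly. lead_coeff p = 1 \<and> degree p = d \<and> poly_mat p D = 0)"

text \<open>The block matrix [D - lambda I, H_S] over the complex numbers. The columns of H not in S
  are replaced by zero columns, which does not change the rank of the matrix.\<close>
definition pbh_block :: "real^'n^'n \<Rightarrow> real^'l^'n \<Rightarrow> 'l set \<Rightarrow> complex \<Rightarrow> complex^('n + 'l)^'n" where
  "pbh_block D H S z = (\<chi> i c. case c of
       Inl j \<Rightarrow> complex_of_real (D $ i $ j) - (if i = j then z else 0)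
     | Inr j \<Rightarrow> (if j \<in> S then complex_of_real (H $ i $ j) else 0))"

definition Sstar :: "real^'n^'n \<Rightarrow> real^'l^'n \<Rightarrow> nat" where
  "Sstar D H = (LEAST m. \<exists>S. card S = m \<and> (\<forall>z::complex. rank (pbh_block D H S z) = CARD('n)))"

definition Rstar :: "real^'l^'n \<Rightarrow> nat \<Rightarrow> nat" where
  "Rstar H s = min (rank H) s"

end

theory Submission
  imports Defs "HOL-Computational_Algebra.Fundamental_Theorem_Algebra"
begin

lemma mat_pow_Suc_mv: "mat_pow D (Suc k) *v v = D *v (mat_pow D k *v v)"
  by (simp add: matrix_vector_mul_assoc)

lemma mat_pow_add_mv: "mat_pow D (a + b) *v v = mat_pow D a *v (mat_pow D b *v v)"
  by (induction a) (auto simp: matrix_vector_mul_assoc[symmetric])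

lemma mat_pow_Suc_mv': "mat_pow D (Suc k) *v v = mat_pow D k *v (D *v v)"
  using mat_pow_add_mv[of D k 1 v] by (simp add: matrix_vector_mul_assoc)

lemma mat_pow_inv:
  fixes D :: "real^'n^'n"
  assumes "(*v) D ` V \<subseteq> V" "x \<in> V"
  shows "mat_pow D k *v x \<in> V"
proof (induction k)
  case (Suc k)
  then show ?case unfolding mat_pow_Suc_mv using assms(1) by blast
qed (use assms in simp)

lemma dim_Un_le:
  fixes A B :: "(real^'n) set"
  shows "dim (A \<union> B) \<le> dim A + dim B"
proof -
  obtain bA where bA: "bA \<subseteq> A" "independent bA" "A \<subseteq> span bA" "card bA = dim A"
    using basis_exists by blast
  obtain bB where bB: "bB \<subseteq> B" "independent bB" "B \<subseteq> span bB" "card bB = dim B"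
    using basis_exists by blast
  have f: "finite bA" "finite bB" using bA(2) bB(2) independent_bound by blast+
  have "A \<union> B \<subseteq> span (bA \<union> bB)"
    using bA bB span_mono[of bA "bA \<union> bB"] span_mono[of bB "bA \<union> bB"] by blast
  then have "dim (A \<union> B) \<le> card (bA \<union> bB)"
    using dim_le_card f by blast
  also have "\<dots> \<le> card bA + card bB" by (rule card_Un_le)
  finally show ?thesis using bA bB by simp
qed

lemma sel:
  fixes f :: "'c \<Rightarrow> real^'n" and X :: "(real^'n) set"
  assumes "finite B"
  shows "m \<le> dim (X \<union> f ` B) - dim X \<Longrightarrow> \<exists>B'. B' \<subseteq> B \<and> card B' = m \<and> dim (X \<union> f ` B') = dim X + m"
proof (induction m)
  case 0
  then show ?case by (intro exI[of _ "{}"]) auto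
next
  case (Suc m)
  then obtain B' where B': "B' \<subseteq> B" "card B' = m" "dim (X \<union> f ` B') = dim X + m" by auto
  have lt: "dim (X \<union> f ` B') < dim (X \<union> f ` B)" using Suc.prems B' by linarith
  have "\<exists>b\<in>B. f b \<notin> span (X \<union> f ` B')"
  proof (rule ccontr)
    assume "\<not> ?thesis"
    then have "X \<union> f ` B \<subseteq> span (X \<union> f ` B')" using span_superset by blast
    then have "dim (X \<union> f ` B) \<le> dim (X \<union> f ` B')" by (rule dim_mono)
    with lt show False by simp
  qed
  then obtain b where b: "b \<in> B" "f b \<notin> span (X \<union> f ` B')" by blast
  have bn: "b \<notin> B'" using b(2) span_superset[of "X \<union> f ` B'"] by blast
  have fin: "finite B'" using B' assms finite_subset by blast
  have "X \<union> f ` insert b B' = insert (f b) (X \<union> f ` B')" by auto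
  then have "dim (X \<union> f ` insert b B') = dim X + m + 1"
    using dim_insert[of "f b" "X \<union> f ` B'"] b(2) B'(3) by (simp only:) simp
  then show ?case using B' b bn fin by (intro exI[of _ "insert b B'"]) auto
qed

lemma sel_full:
  fixes f :: "'c \<Rightarrow> real^'n" and X :: "(real^'n) set"
  assumes "finite B"
  shows "\<exists>B'. B' \<subseteq> B \<and> card B' = dim (X \<union> f ` B) - dim X \<and> span (X \<union> f ` B') = span (X \<union> f ` B)"
proof -
  obtain B' where B': "B' \<subseteq> B" "card B' = dim (X \<union> f ` B) - dim X" "dim (X \<union> f ` B') = dim X + (dim (X \<union> f ` B) - dim X)"
    using sel[OF assms, of "dim (X \<union> f ` B) - dim X" X f] by auto
  have le: "dim X \<le> dim (X \<union> f ` B)" by (rule dim_subset) auto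
  have sub: "span (X \<union> f ` B') \<subseteq> span (X \<union> f ` B)" using B' by (intro span_mono) auto
  have "dim (span (X \<union> f ` B)) \<le> dim (span (X \<union> f ` B'))" using B'(3) le by simp
  then have "span (X \<union> f ` B') = span (X \<union> f ` B)"
    using subspace_dim_equal[OF subspace_span subspace_span sub] by simp
  with B' show ?thesis by blast
qed

lemma span_sup1: "A \<subseteq> span (A \<union> B)"
  by (meson Un_upper1 span_superset subset_trans)

lemma span_sup2: "B \<subseteq> span (A \<union> B)"
  by (meson Un_upper2 span_superset subset_trans)

definition gen :: "real^'n^'n \<Rightarrow> real^'l^'n \<Rightarrow> (nat \<Rightarrow> 'l set) \<Rightarrow> nat \<Rightarrow> (real^'n) set" where
  "gen D H T K = {mat_pow D k *v column c H | k c. k < K \<and> c \<in> T k}"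

definition Kr :: "real^'n^'n \<Rightarrow> real^'l^'n \<Rightarrow> 'l set \<Rightarrow> (real^'n) set" where
  "Kr D H G = {mat_pow D k *v column c H | k c. c \<in> G}"

lemma span_image_mv: "(*v) D ` span S = span ((*v) D ` S)" for D :: "real^'n^'n"
  by (simp add: span_linear_image)

lemma span_inv:
  fixes D :: "real^'n^'n"
  assumes "(*v) D ` S \<subseteq> span S"
  shows "(*v) D ` span S \<subseteq> span S"
  using assms by (simp add: span_image_mv span_minimal)

lemma gen_Suc_img: "(*v) D ` gen D H T K \<subseteq> gen D H (\<lambda>k. T (k - 1)) (Suc K)"
proof
  fix x assume "x \<in> (*v) D ` gen D H T K"
  then obtain k c where kc: "k < K" "c \<in> T k" "x = D *v (mat_pow D k *v column c H)"
    unfolding gen_def by auto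
  then have "x = mat_pow D (Suc k) *v column c H" by (simp only: mat_pow_Suc_mv)
  then show "x \<in> gen D H (\<lambda>k. T (k - 1)) (Suc K)" unfolding gen_def using kc by force
qed

lemma krylov:
  fixes D :: "real^'n^'n" and H :: "real^'l^'n" and G :: "'l set"
  assumes X: "subspace X" "(*v) D ` X \<subseteq> X"
  defines "X' \<equiv> span (X \<union> Kr D H G)"
  defines "g \<equiv> dim (X \<union> (\<lambda>c. column c H) ` G) - dim X"
  shows "span (X \<union> gen D H (\<lambda>_. G) (dim X' - dim X - g + 1)) = X'"
proof -
  define Y where "Y j = span (X \<union> gen D H (\<lambda>_. G) j)" for j
  have genKr: "gen D H (\<lambda>_. G) j \<subseteq> Kr D H G" for j unfolding gen_def Kr_def by auto
  have a: "Y j \<subseteq> X'" for j unfolding Y_def X'_def using genKr by (intro span_mono) blast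
  have genmono: "gen D H (\<lambda>_. G) j \<subseteq> gen D H (\<lambda>_. G) (Suc j)" for j unfolding gen_def by force
  have b: "Y j \<subseteq> Y (Suc j)" for j unfolding Y_def using genmono by (intro span_mono) blast
  have c: "(*v) D ` Y j \<subseteq> Y (Suc j)" for j
  proof -
    have "(*v) D ` (X \<union> gen D H (\<lambda>_. G) j) \<subseteq> X \<union> gen D H (\<lambda>_. G) (Suc j)"
      using X(2) gen_Suc_img[of D H "\<lambda>_. G" j] by auto
    then show ?thesis unfolding Y_def span_image_mv by (intro span_mono) 
  qed
  have col1: "column c H \<in> Y (Suc j)" if "c \<in> G" for c j
  proof -
    have "column c H \<in> gen D H (\<lambda>_. G) (Suc j)" unfolding gen_def using that
      by (auto intro!: exI[of _ 0])
    then show ?thesis unfolding Y_def by (intro subsetD[OF span_superset] UnI2)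
  qed
  have d: "Y j = X'" if eq: "Y (Suc j) = Y j" for j
  proof
    show "Y j \<subseteq> X'" by (rule a)
    have inv: "(*v) D ` Y j \<subseteq> Y j" using c[of j] unfolding eq .
    have "Kr D H G \<subseteq> Y j"
    proof
      fix x assume "x \<in> Kr D H G"
      then obtain k c where x: "x = mat_pow D k *v column c H" "c \<in> G" unfolding Kr_def by auto
      have "column c H \<in> Y j" using col1[OF x(2), of j] eq by simp
      then show "x \<in> Y j" unfolding x(1) by (rule mat_pow_inv[OF inv])
    qed
    moreover have "X \<subseteq> Y j" unfolding Y_def by (rule span_sup1)
    ultimately show "X' \<subseteq> Y j" unfolding X'_def Y_def by (simp add: span_minimal)
  qed
  have gen1: "gen D H (\<lambda>_. G) (Suc 0) = (\<lambda>c. column c H) ` G" unfolding gen_def by auto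
  have dimX: "dim X \<le> dim (X \<union> (\<lambda>c. column c H) ` G)" by (rule dim_subset) auto
  have e: "Y (Suc j) = X' \<or> dim X + g + j \<le> dim (Y (Suc j))" for j
  proof (induction j)
    case 0
    show ?case unfolding Y_def gen1 g_def using dimX by simp
  next
    case (Suc j)
    show ?case
    proof (cases "Y (Suc j) = X'")
      case True
      then have "Y (Suc (Suc j)) = X'" using a[of "Suc (Suc j)"] b[of "Suc j"] by auto
      then show ?thesis by simp
    next
      case False
      then have ne: "Y (Suc (Suc j)) \<noteq> Y (Suc j)" using d by blast
      have "Y (Suc j) \<subset> Y (Suc (Suc j))" using b ne by blast
      then have "dim (Y (Suc j)) < dim (Y (Suc (Suc j)))" unfolding Y_def
        by (metis dim_psubset span_span)
      then show ?thesis using Suc False by simp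
    qed
  qed
  have gle: "dim X + g \<le> dim X'"
  proof -
    have s1: "X \<union> (\<lambda>c. column c H) ` G \<subseteq> X'"
      using a[of "Suc 0"] span_superset[of "X \<union> (\<lambda>c. column c H) ` G"] unfolding Y_def gen1 by blast
    have "dim (X \<union> (\<lambda>c. column c H) ` G) \<le> dim X'"
      using dim_subset[OF s1] .
    then show ?thesis unfolding g_def using dimX by simp
  qed
  define j0 where "j0 = dim X' - dim X - g"
  have "Y (Suc j0) = X'"
  proof -
    from e[of j0] consider "Y (Suc j0) = X'" | "dim X' \<le> dim (Y (Suc j0))"
      unfolding j0_def using gle by fastforce
    then show ?thesis
    proof cases
      case 2
      have "subspace X'" unfolding X'_def by simp
      then show ?thesis using subspace_dim_equal[of "Y (Suc j0)" X'] a 2 unfolding Y_def by simp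
    qed simp
  qed
  then show ?thesis unfolding Y_def j0_def by simp
qed

lemma column_mult: "column c (D ** H) = D *v column c H"
  by (simp add: column_def matrix_matrix_mult_def matrix_vector_mult_def vec_eq_iff)

lemma Kr_inv: "(*v) D ` Kr D H G \<subseteq> Kr D H G"
proof
  fix x assume "x \<in> (*v) D ` Kr D H G"
  then obtain k c where "c \<in> G" "x = D *v (mat_pow D k *v column c H)" unfolding Kr_def by auto
  then have "c \<in> G" "x = mat_pow D (Suc k) *v column c H" by (simp_all only: mat_pow_Suc_mv)
  then show "x \<in> Kr D H G" unfolding Kr_def by blast
qed

lemma Kr_sub:
  fixes D :: "real^'n^'n"
  assumes "(*v) D ` V \<subseteq> V" "(\<lambda>c. column c H) ` G \<subseteq> V"
  shows "Kr D H G \<subseteq> V"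
proof
  fix x assume "x \<in> Kr D H G"
  then obtain k c where "c \<in> G" "x = mat_pow D k *v column c H" unfolding Kr_def by auto
  then show "x \<in> V" using mat_pow_inv[OF assms(1)] assms(2) by blast
qed

lemma col_Kr: "(\<lambda>c. column c H) ` G \<subseteq> Kr D H G"
proof
  fix x assume "x \<in> (\<lambda>c. column c H) ` G"
  then obtain c where "c \<in> G" "x = mat_pow D 0 *v column c H" by auto
  then show "x \<in> Kr D H G" unfolding Kr_def by blast
qed

lemma Kr_mult: "Kr D (D ** H) UNIV = (*v) D ` Kr D H UNIV"
proof -
  have "mat_pow D k *v column c (D ** H) = D *v (mat_pow D k *v column c H)" for k c
    by (simp only: column_mult mat_pow_Suc_mv'[symmetric] mat_pow_Suc_mv)
  then show ?thesis unfolding Kr_def by auto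
qed

lemma span_closeV:
  fixes D :: "real^'n^'n"
  assumes "subspace Z" "(*v) D ` Z \<subseteq> Z" "X \<subseteq> Z" "range (\<lambda>c. column c H) \<subseteq> Z"
  shows "span (X \<union> Kr D H UNIV) \<subseteq> Z"
  using Kr_sub[OF assms(2,4)] assms(1,3) by (intro span_minimal) auto

lemma iter_span:
  fixes D :: "real^'n^'n"
  assumes V: "span (X \<union> (*v) D ` V) = V" and DX: "(*v) D ` X \<subseteq> X"
  shows "V \<subseteq> span (X \<union> (\<lambda>v. mat_pow D m *v v) ` V)"
proof (induction m)
  case 0
  then show ?case using span_sup2[of V X] by simp
next
  case (Suc m)
  have lin: "linear (\<lambda>v. mat_pow D m *v v)" by simp
  have "(\<lambda>v. mat_pow D m *v v) ` V = (\<lambda>v. mat_pow D m *v v) ` span (X \<union> (*v) D ` V)"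
    using V by simp
  also have "\<dots> = span ((\<lambda>v. mat_pow D m *v v) ` (X \<union> (*v) D ` V))"
    by (rule span_image_mv)
  also have "\<dots> \<subseteq> span (X \<union> (\<lambda>v. mat_pow D (Suc m) *v v) ` V)"
  proof (rule span_mono)
    show "(\<lambda>v. mat_pow D m *v v) ` (X \<union> (*v) D ` V) \<subseteq> X \<union> (\<lambda>v. mat_pow D (Suc m) *v v) ` V"
    proof
      fix y assume "y \<in> (\<lambda>v. mat_pow D m *v v) ` (X \<union> (*v) D ` V)"
      then obtain x where x: "x \<in> X \<union> (*v) D ` V" "y = mat_pow D m *v x" by blast
      show "y \<in> X \<union> (\<lambda>v. mat_pow D (Suc m) *v v) ` V"
      proof (cases "x \<in> X")
        case True then show ?thesis using mat_pow_inv[OF DX] x by blast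
      next
        case False
        then obtain v where "v \<in> V" "x = D *v v" using x by blast
        then have "y = mat_pow D (Suc m) *v v" using x by (simp only: mat_pow_Suc_mv')
        then show ?thesis using \<open>v \<in> V\<close> by blast
      qed
    qed
  qed
  finally have "(\<lambda>v. mat_pow D m *v v) ` V \<subseteq> span (X \<union> (\<lambda>v. mat_pow D (Suc m) *v v) ` V)" .
  then have "X \<union> (\<lambda>v. mat_pow D m *v v) ` V \<subseteq> span (X \<union> (\<lambda>v. mat_pow D (Suc m) *v v) ` V)"
    using span_sup1[of X "(\<lambda>v. mat_pow D (Suc m) *v v) ` V"] by (intro Un_least) auto
  then have "span (X \<union> (\<lambda>v. mat_pow D m *v v) ` V) \<subseteq> span (X \<union> (\<lambda>v. mat_pow D (Suc m) *v v) ` V)"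
    by (intro span_minimal) auto
  then show ?case by (rule subset_trans[OF Suc.IH])
qed

lemma ineq_B:
  fixes D :: "real^'n^'n" and H :: "real^'l^'n"
  assumes V: "subspace V" and XV: "X \<subseteq> V" and HV: "range (\<lambda>c. column c H) \<subseteq> V"
    and DX: "(*v) D ` X \<subseteq> X"
  shows "dim (X \<union> range (\<lambda>c. column c H)) + dim (span (X \<union> (*v) D ` V))
         \<le> dim (X \<union> range (\<lambda>c. column c (D ** H))) + dim V"
proof -
  define Z where "Z = span (X \<union> range (\<lambda>c. column c H))"
  have ZV: "Z \<subseteq> V" unfolding Z_def using XV HV V by (intro span_minimal) auto
  obtain B where B: "B \<subseteq> V" "independent B" "V \<subseteq> span B" "card B = dim V"
    using basis_exists by blast
  have fB: "finite B" using B(2) independent_bound by blast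
  obtain B' where B': "B' \<subseteq> B" "card B' = dim (Z \<union> id ` B) - dim Z" "span (Z \<union> id ` B') = span (Z \<union> id ` B)"
    using sel_full[OF fB, of Z id] by blast
  have spZB: "span (Z \<union> B) = V"
  proof
    show "span (Z \<union> B) \<subseteq> V" using ZV B(1) V by (intro span_minimal) auto
    show "V \<subseteq> span (Z \<union> B)" using B(3) span_mono[of B "Z \<union> B"] by blast
  qed
  have dimZB: "dim (Z \<union> B) = dim V" using spZB by (metis dim_span)
  have cardB': "card B' = dim V - dim Z" using B'(2) dimZB by simp
  have spB': "span (Z \<union> B') = V" using B'(3) spZB by simp
  have fB': "finite B'" using B'(1) fB finite_subset by blast
  have "(*v) D ` V = span ((*v) D ` (Z \<union> B'))" using spB' span_image_mv[of D "Z \<union> B'"] by simp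
  also have "\<dots> = span ((*v) D ` Z \<union> (*v) D ` B')" by (simp add: image_Un)
  finally have DVe: "(*v) D ` V = span ((*v) D ` Z \<union> (*v) D ` B')" .
  have "span (X \<union> (*v) D ` V) \<subseteq> span ((X \<union> (*v) D ` Z) \<union> (*v) D ` B')"
  proof (rule span_minimal)
    show "X \<union> (*v) D ` V \<subseteq> span ((X \<union> (*v) D ` Z) \<union> (*v) D ` B')"
    proof -
      have "span ((*v) D ` Z \<union> (*v) D ` B') \<subseteq> span ((X \<union> (*v) D ` Z) \<union> (*v) D ` B')"
        by (intro span_mono) auto
      moreover have "X \<subseteq> span ((X \<union> (*v) D ` Z) \<union> (*v) D ` B')"
        using span_sup1[of "X \<union> (*v) D ` Z" "(*v) D ` B'"] by blast
      ultimately show ?thesis using DVe by blast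
    qed
  qed simp
  then have "dim (span (X \<union> (*v) D ` V)) \<le> dim ((X \<union> (*v) D ` Z) \<union> (*v) D ` B')"
    by (metis dim_mono dim_span span_span)
  also have "\<dots> \<le> dim (X \<union> (*v) D ` Z) + dim ((*v) D ` B')" by (rule dim_Un_le)
  also have "dim ((*v) D ` B') \<le> card B'"
  proof -
    have "dim ((*v) D ` B') \<le> card ((*v) D ` B')"
      by (rule dim_le_card[OF span_superset]) (use fB' in simp)
    also have "\<dots> \<le> card B'" using fB' card_image_le by blast
    finally show ?thesis .
  qed
  finally have 1: "dim (span (X \<union> (*v) D ` V)) \<le> dim (X \<union> (*v) D ` Z) + card B'" by simp
  have 2: "dim (X \<union> (*v) D ` Z) = dim (X \<union> range (\<lambda>c. column c (D ** H)))"
  proof (rule span_eq_dim)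
    have DZ: "(*v) D ` Z = span ((*v) D ` X \<union> range (\<lambda>c. column c (D ** H)))"
      unfolding Z_def span_image_mv image_Un by (simp add: column_mult image_image)
    show "span (X \<union> (*v) D ` Z) = span (X \<union> range (\<lambda>c. column c (D ** H)))"
    proof
      show "span (X \<union> (*v) D ` Z) \<subseteq> span (X \<union> range (\<lambda>c. column c (D ** H)))"
      proof (rule span_minimal)
        have "span ((*v) D ` X \<union> range (\<lambda>c. column c (D ** H))) \<subseteq> span (X \<union> range (\<lambda>c. column c (D ** H)))"
          using DX by (intro span_mono) auto
        then show "X \<union> (*v) D ` Z \<subseteq> span (X \<union> range (\<lambda>c. column c (D ** H)))"
          using DZ span_sup1 by blast
      qed simp
      show "span (X \<union> range (\<lambda>c. column c (D ** H))) \<subseteq> span (X \<union> (*v) D ` Z)"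
      proof (rule span_mono)
        have "range (\<lambda>c. column c (D ** H)) \<subseteq> (*v) D ` Z"
        proof
          fix y assume "y \<in> range (\<lambda>c. column c (D ** H))"
          then obtain c where "y = D *v column c H" by (auto simp: column_mult)
          moreover have "column c H \<in> Z" unfolding Z_def by (rule subsetD[OF span_sup2]) simp
          ultimately show "y \<in> (*v) D ` Z" by blast
        qed
        then show "X \<union> range (\<lambda>c. column c (D ** H)) \<subseteq> X \<union> (*v) D ` Z" by blast
      qed
    qed
  qed
  have dZ: "dim Z = dim (X \<union> range (\<lambda>c. column c H))" unfolding Z_def by simp
  have "dim Z \<le> dim V" using dim_subset[OF ZV] by simp
  then show ?thesis using 1 2 dZ cardB' by linarith
qed

lemma main_lemma:
  fixes D :: "real^'n^'n" and H :: "real^'l^'n" and s :: nat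
  assumes s: "0 < s"
    and V: "subspace V" and Xs: "subspace X" and XV: "X \<subseteq> V"
    and DV: "(*v) D ` V \<subseteq> V" and DX: "(*v) D ` X \<subseteq> X"
    and HV: "range (\<lambda>c. column c H) \<subseteq> V"
    and KrV: "span (X \<union> Kr D H UNIV) = V"
    and ii: "\<exists>S. card S \<le> s \<and> span (X \<union> (*v) D ` V \<union> (\<lambda>c. column c H) ` S) = V"
  shows "\<exists>T K. (\<forall>k. card (T k) \<le> s) \<and>
           K + min (dim (X \<union> range (\<lambda>c. column c H)) - dim X) s \<le> dim V - dim X + 1 \<and>
           V \<subseteq> span (X \<union> gen D H T K)"
  using V Xs XV DV DX HV KrV ii
proof (induction "dim V - dim X" arbitrary: V X H rule: less_induct)
  case less
  note IH = less.hyps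
  note V = less.prems(1) and Xs = less.prems(2) and XV = less.prems(3) and DV = less.prems(4)
    and DX = less.prems(5) and HV = less.prems(6) and KrV = less.prems(7) and ii = less.prems(8)
  obtain S where S: "card S \<le> s" "span (X \<union> (*v) D ` V \<union> (\<lambda>c. column c H) ` S) = V"
    using ii by blast
  define rb where "rb = dim (X \<union> range (\<lambda>c. column c H)) - dim X"
  have dimXV: "dim X \<le> dim V" using dim_subset[OF XV] .
  have dimXC: "dim X \<le> dim (X \<union> range (\<lambda>c. column c H))" by (rule dim_subset) auto
  have dimCV: "dim (X \<union> range (\<lambda>c. column c H)) \<le> dim V" using XV HV by (intro dim_subset) auto
  have spanV: "span V = V" using V by simp
  have closeV: "V \<subseteq> Z" if "subspace Z" "(*v) D ` Z \<subseteq> Z" "X \<subseteq> Z" "range (\<lambda>c. column c H) \<subseteq> Z" for Z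
    using span_closeV[OF that] KrV by simp
  show ?case
  proof (cases "rb \<le> s")
    case True
    obtain G where G: "card G = dim (X \<union> (\<lambda>c. column c H) ` UNIV) - dim X"
      "span (X \<union> (\<lambda>c. column c H) ` G) = span (X \<union> (\<lambda>c. column c H) ` UNIV)"
      using sel_full[of UNIV X "\<lambda>c. column c H"] by auto
    define X' where "X' = span (X \<union> Kr D H G)"
    have X'V: "X' = V"
    proof
      show "X' \<subseteq> V" unfolding X'_def using XV Kr_sub[OF DV, of H G] HV V
        by (intro span_minimal) auto
      show "V \<subseteq> X'"
      proof (rule closeV)
        show "subspace X'" unfolding X'_def by simp
        show "(*v) D ` X' \<subseteq> X'" unfolding X'_def
          using DX Kr_inv[of D H G] span_sup1[of X "Kr D H G"] span_sup2[of "Kr D H G" X]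
          by (intro span_inv) blast
        show "X \<subseteq> X'" unfolding X'_def by (rule span_sup1)
        have "range (\<lambda>c. column c H) \<subseteq> span (X \<union> (\<lambda>c. column c H) ` G)"
          using G(2) span_sup2[of "range (\<lambda>c. column c H)" X] by simp
        also have "\<dots> \<subseteq> X'" unfolding X'_def using col_Kr[of H G D] by (intro span_mono) blast
        finally show "range (\<lambda>c. column c H) \<subseteq> X'" .
      qed
    qed
    have g: "dim (X \<union> (\<lambda>c. column c H) ` G) - dim X = rb"
      unfolding rb_def using span_eq_dim[OF G(2)] by simp
    have kr: "span (X \<union> gen D H (\<lambda>_. G) (dim X' - dim X - rb + 1)) = X'"
      using krylov[OF Xs DX, of H G] unfolding X'_def[symmetric] g .
    show ?thesis
    proof (intro exI conjI)
      show "\<forall>k. card ((\<lambda>_. G) k) \<le> s" using G(1) True unfolding rb_def by simp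
      show "dim V - dim X - rb + 1 + min (dim (X \<union> range (\<lambda>c. column c H)) - dim X) s \<le> dim V - dim X + 1"
        using True dimCV dimXC unfolding rb_def by simp
      show "V \<subseteq> span (X \<union> gen D H (\<lambda>_. G) (dim V - dim X - rb + 1))"
        using kr X'V by simp
    qed
  next
    case False
    then have rbs: "s < rb" by simp
    show ?thesis
    proof (cases "span (X \<union> (*v) D ` V) = V")
      case False
      define V' where "V' = span (X \<union> (*v) D ` V)"
      define H2 where "H2 = D ** H"
      have V'V: "V' \<subseteq> V" unfolding V'_def using XV DV V by (intro span_minimal) auto
      have V'ne: "V' \<noteq> V" using False unfolding V'_def by simp
      have dV': "dim V' < dim V"
      proof -
        have "span V' \<subset> span V" using V'V V'ne unfolding spanV by (simp add: V'_def psubset_eq span_span)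
        then show ?thesis by (metis dim_psubset dim_span)
      qed
      have XV': "X \<subseteq> V'" unfolding V'_def by (rule span_sup1)
      have DVV': "(*v) D ` V \<subseteq> V'" unfolding V'_def by (rule span_sup2)
      have h1: "subspace V'" unfolding V'_def by simp
      have h2: "(*v) D ` V' \<subseteq> V'"
        unfolding V'_def
      proof (rule span_inv)
        have "(*v) D ` (*v) D ` V \<subseteq> (*v) D ` V" using DV by blast
        then show "(*v) D ` (X \<union> (*v) D ` V) \<subseteq> span (X \<union> (*v) D ` V)"
          using DX span_superset[of "X \<union> (*v) D ` V"] by blast
      qed
      have h3: "range (\<lambda>c. column c H2) \<subseteq> V'"
        unfolding H2_def column_mult using HV DVV' by blast
      have KrsubV: "Kr D H UNIV \<subseteq> V" using Kr_sub[OF DV, of H UNIV] HV by simp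
      have h4: "span (X \<union> Kr D H2 UNIV) = V'"
      proof
        show "span (X \<union> Kr D H2 UNIV) \<subseteq> V'"
          unfolding H2_def Kr_mult using XV' KrsubV DVV' h1 by (intro span_minimal) auto
        show "V' \<subseteq> span (X \<union> Kr D H2 UNIV)"
          unfolding V'_def
        proof (rule span_minimal)
          have "(*v) D ` V = span ((*v) D ` (X \<union> Kr D H UNIV))"
            using KrV span_image_mv[of D "X \<union> Kr D H UNIV"] by simp
          also have "\<dots> \<subseteq> span (X \<union> Kr D H2 UNIV)"
            unfolding H2_def Kr_mult using DX by (intro span_mono) auto
          finally show "X \<union> (*v) D ` V \<subseteq> span (X \<union> Kr D H2 UNIV)"
            using span_sup1[of X "Kr D H2 UNIV"] by blast
        qed simp
      qed
      have h5: "\<exists>S. card S \<le> s \<and> span (X \<union> (*v) D ` V' \<union> (\<lambda>c. column c H2) ` S) = V'"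
      proof (intro exI conjI)
        show "card S \<le> s" by (rule S(1))
        show "span (X \<union> (*v) D ` V' \<union> (\<lambda>c. column c H2) ` S) = V'"
        proof
          show "span (X \<union> (*v) D ` V' \<union> (\<lambda>c. column c H2) ` S) \<subseteq> V'"
            using XV' h2 h3 h1 by (intro span_minimal) auto
          have "span (X \<union> (*v) D ` V) \<subseteq> span (X \<union> (*v) D ` V' \<union> (\<lambda>c. column c H2) ` S)"
          proof (rule span_minimal)
            have "(*v) D ` V = span ((*v) D ` (X \<union> (*v) D ` V \<union> (\<lambda>c. column c H) ` S))"
              using S(2) span_image_mv[of D "X \<union> (*v) D ` V \<union> (\<lambda>c. column c H) ` S"] by simp
            also have "\<dots> \<subseteq> span (X \<union> (*v) D ` V' \<union> (\<lambda>c. column c H2) ` S)"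
            proof (rule span_mono)
              have "(*v) D ` (*v) D ` V \<subseteq> (*v) D ` V'" using DVV' by blast
              moreover have "(*v) D ` (\<lambda>c. column c H) ` S = (\<lambda>c. column c H2) ` S"
                unfolding H2_def column_mult by auto
              ultimately show "(*v) D ` (X \<union> (*v) D ` V \<union> (\<lambda>c. column c H) ` S)
                  \<subseteq> X \<union> (*v) D ` V' \<union> (\<lambda>c. column c H2) ` S" using DX by blast
            qed
            finally show "X \<union> (*v) D ` V \<subseteq> span (X \<union> (*v) D ` V' \<union> (\<lambda>c. column c H2) ` S)"
              using span_sup1[of X "(*v) D ` V' \<union> (\<lambda>c. column c H2) ` S"] by (simp add: Un_assoc)
          qed simp
          then show "V' \<subseteq> span (X \<union> (*v) D ` V' \<union> (\<lambda>c. column c H2) ` S)"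
            by (simp only: V'_def)
        qed
      qed
      have lt: "dim V' - dim X < dim V - dim X"
        using dV' dim_subset[OF XV'] dimXV by linarith
      obtain T' K' where T': "\<forall>k. card (T' k) \<le> s"
        "K' + min (dim (X \<union> range (\<lambda>c. column c H2)) - dim X) s \<le> dim V' - dim X + 1"
        "V' \<subseteq> span (X \<union> gen D H2 T' K')"
        using IH[OF lt h1 Xs XV' h2 DX h3 h4 h5] by blast
      define T where "T k = (if k = 0 then S else T' (k - 1))" for k
      have genT: "(\<lambda>c. column c H) ` S \<union> gen D H2 T' K' \<subseteq> gen D H T (Suc K')"
      proof
        fix x assume "x \<in> (\<lambda>c. column c H) ` S \<union> gen D H2 T' K'"
        then show "x \<in> gen D H T (Suc K')"
        proof
          assume "x \<in> (\<lambda>c. column c H) ` S"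
          then obtain c where c: "c \<in> S" "x = mat_pow D 0 *v column c H" by auto
          have "c \<in> T 0" "0 < Suc K'" using c(1) unfolding T_def by auto
          then show ?thesis unfolding gen_def using c(2) by blast
        next
          assume "x \<in> gen D H2 T' K'"
          then obtain k c where kc: "k < K'" "c \<in> T' k" "x = mat_pow D k *v column c H2"
            unfolding gen_def by auto
          then have "x = mat_pow D (Suc k) *v column c H"
            unfolding H2_def column_mult by (simp only: mat_pow_Suc_mv')
          moreover have "Suc k < Suc K'" "c \<in> T (Suc k)" using kc unfolding T_def by auto
          ultimately show ?thesis unfolding gen_def by blast
        qed
      qed
      have ineq: "dim (X \<union> range (\<lambda>c. column c H)) + dim V' \<le> dim (X \<union> range (\<lambda>c. column c H2)) + dim V"
        using ineq_B[OF V XV HV DX] unfolding V'_def H2_def by simp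
      show ?thesis
      proof (intro exI conjI)
        show "\<forall>k. card (T k) \<le> s" using T'(1) S(1) unfolding T_def by simp
        have "dim X \<le> dim (X \<union> range (\<lambda>c. column c H2))" by (rule dim_subset) auto
        then show "Suc K' + min (dim (X \<union> range (\<lambda>c. column c H)) - dim X) s \<le> dim V - dim X + 1"
          using T'(2) ineq rbs dV' dimXC dimXV dim_subset[OF XV'] unfolding rb_def by linarith
        have "X \<union> (*v) D ` V \<union> (\<lambda>c. column c H) ` S \<subseteq> span (X \<union> gen D H T (Suc K'))"
        proof -
          have "span (X \<union> gen D H2 T' K') \<subseteq> span (X \<union> gen D H T (Suc K'))"
            using genT by (intro span_mono) blast
          then have "V' \<subseteq> span (X \<union> gen D H T (Suc K'))" using T'(3) by blast
          moreover have "(\<lambda>c. column c H) ` S \<subseteq> span (X \<union> gen D H T (Suc K'))"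
            using genT span_sup2[of "gen D H T (Suc K')" X] by blast
          ultimately show ?thesis using XV' DVV' by blast
        qed
        then show "V \<subseteq> span (X \<union> gen D H T (Suc K'))"
          using S(2) span_minimal[of _ "span (X \<union> gen D H T (Suc K'))"] by (metis subspace_span)
      qed
    next
      case True
      then have VDV: "span (X \<union> (*v) D ` V) = V" .
      obtain G where G: "card G = s" "dim (X \<union> (\<lambda>c. column c H) ` G) = dim X + s"
        using sel[of UNIV s X "\<lambda>c. column c H"] rbs unfolding rb_def by auto
      define X' where "X' = span (X \<union> Kr D H G)"
      have X'sub: "X' \<subseteq> V" unfolding X'_def using XV Kr_sub[OF DV, of H G] HV V
        by (intro span_minimal) auto
      have DX': "(*v) D ` X' \<subseteq> X'" unfolding X'_def
        using DX Kr_inv[of D H G] span_sup1[of X "Kr D H G"] span_sup2[of "Kr D H G" X]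
        by (intro span_inv) blast
      have XX': "X \<subseteq> X'" unfolding X'_def by (rule span_sup1)
      have CX': "X \<union> (\<lambda>c. column c H) ` G \<subseteq> X'"
        unfolding X'_def using col_Kr[of H G D] span_sup1[of X "Kr D H G"] span_sup2[of "Kr D H G" X]
        by blast
      have dX': "dim X + s \<le> dim X'" using dim_subset[OF CX'] G(2) by simp
      have dX'V: "dim X' \<le> dim V" using dim_subset[OF X'sub] .
      define l where "l = dim X' - dim X - s + 1"
      have kr: "span (X \<union> gen D H (\<lambda>_. G) l) = X'"
        using krylov[OF Xs DX, of H G] unfolding X'_def[symmetric] G(2) l_def by simp
      show ?thesis
      proof (cases "X' = V")
        case True
        show ?thesis
        proof (intro exI conjI)
          show "\<forall>k. card ((\<lambda>_. G) k) \<le> s" using G(1) by simp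
          show "l + min (dim (X \<union> range (\<lambda>c. column c H)) - dim X) s \<le> dim V - dim X + 1"
            using True dX' unfolding l_def by simp
          show "V \<subseteq> span (X \<union> gen D H (\<lambda>_. G) l)" using kr True by simp
        qed
      next
        case False
        have lt: "dim V - dim X' < dim V - dim X" using dX' s dX'V by linarith
        have h1: "subspace X'" unfolding X'_def by simp
        have h4: "span (X' \<union> Kr D H UNIV) = V"
        proof
          show "span (X' \<union> Kr D H UNIV) \<subseteq> V"
            using X'sub Kr_sub[OF DV, of H UNIV] HV V by (intro span_minimal) auto
          show "V \<subseteq> span (X' \<union> Kr D H UNIV)"
            using KrV XX' by (metis span_mono sup.mono order_refl)
        qed
        have h5: "\<exists>S. card S \<le> s \<and> span (X' \<union> (*v) D ` V \<union> (\<lambda>c. column c H) ` S) = V"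
        proof (intro exI conjI)
          show "card S \<le> s" by (rule S(1))
          show "span (X' \<union> (*v) D ` V \<union> (\<lambda>c. column c H) ` S) = V"
          proof
            show "span (X' \<union> (*v) D ` V \<union> (\<lambda>c. column c H) ` S) \<subseteq> V"
              using X'sub DV HV V by (intro span_minimal) auto
            have "span (X \<union> (*v) D ` V) \<subseteq> span (X' \<union> (*v) D ` V \<union> (\<lambda>c. column c H) ` S)"
              using XX' by (intro span_mono) blast
            then show "V \<subseteq> span (X' \<union> (*v) D ` V \<union> (\<lambda>c. column c H) ` S)" using VDV by simp
          qed
        qed
        obtain T' K' where T': "\<forall>k. card (T' k) \<le> s"
          "K' + min (dim (X' \<union> range (\<lambda>c. column c H)) - dim X') s \<le> dim V - dim X' + 1"
          "V \<subseteq> span (X' \<union> gen D H T' K')"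
          using IH[OF lt V h1 X'sub DV DX' HV h4 h5] by blast
        have rb1: "dim X' < dim (X' \<union> range (\<lambda>c. column c H))"
        proof -
          have "\<not> range (\<lambda>c. column c H) \<subseteq> X'"
          proof
            assume "range (\<lambda>c. column c H) \<subseteq> X'"
            then have "V \<subseteq> X'" using closeV[OF h1 DX' XX'] by blast
            then show False using False X'sub by blast
          qed
          then obtain c where c: "column c H \<notin> X'" by blast
          then have "column c H \<notin> span X'" using h1 by (metis span_eq_iff)
          then have "dim (insert (column c H) X') = dim X' + 1" by (simp add: dim_insert)
          moreover have "dim (insert (column c H) X') \<le> dim (X' \<union> range (\<lambda>c. column c H))"
            by (rule dim_subset) auto
          ultimately show ?thesis by simp
        qed
        define T where "T k = (if k < l then G else T' (k - l))" for k
        have genT: "gen D H (\<lambda>_. G) l \<union> (\<lambda>v. mat_pow D l *v v) ` gen D H T' K' \<subseteq> gen D H T (l + K')"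
        proof
          fix x assume "x \<in> gen D H (\<lambda>_. G) l \<union> (\<lambda>v. mat_pow D l *v v) ` gen D H T' K'"
          then show "x \<in> gen D H T (l + K')"
          proof
            assume "x \<in> gen D H (\<lambda>_. G) l"
            then obtain k c where kc: "k < l" "c \<in> G" "x = mat_pow D k *v column c H"
              unfolding gen_def by blast
            have "c \<in> T k" "k < l + K'" using kc unfolding T_def by auto
            then show ?thesis unfolding gen_def using kc(3) by blast
          next
            assume "x \<in> (\<lambda>v. mat_pow D l *v v) ` gen D H T' K'"
            then obtain k c where kc: "k < K'" "c \<in> T' k" "x = mat_pow D l *v (mat_pow D k *v column c H)"
              unfolding gen_def by auto
            then have "x = mat_pow D (l + k) *v column c H" by (simp only: mat_pow_add_mv)
            moreover have "l + k < l + K'" "c \<in> T (l + k)" using kc unfolding T_def by auto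
            ultimately show ?thesis unfolding gen_def by blast
          qed
        qed
        define W where "W = span (X \<union> gen D H T (l + K'))"
        have X'W: "X' \<subseteq> W" unfolding W_def kr[symmetric] using genT by (intro span_mono) blast
        have "(\<lambda>v. mat_pow D l *v v) ` V \<subseteq> W"
        proof -
          have "(\<lambda>v. mat_pow D l *v v) ` V \<subseteq> (\<lambda>v. mat_pow D l *v v) ` span (X' \<union> gen D H T' K')"
            using T'(3) by blast
          also have "\<dots> = span ((\<lambda>v. mat_pow D l *v v) ` (X' \<union> gen D H T' K'))"
            by (rule span_image_mv)
          also have "\<dots> \<subseteq> W"
          proof (rule span_minimal)
            have "(\<lambda>v. mat_pow D l *v v) ` X' \<subseteq> X'" using mat_pow_inv[OF DX'] by blast
            moreover have "(\<lambda>v. mat_pow D l *v v) ` gen D H T' K' \<subseteq> W"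
              unfolding W_def using genT span_sup2[of "gen D H T (l + K')" X] by blast
            ultimately show "(\<lambda>v. mat_pow D l *v v) ` (X' \<union> gen D H T' K') \<subseteq> W" using X'W by blast
            show "subspace W" unfolding W_def by simp
          qed
          finally show ?thesis .
        qed
        then have "V \<subseteq> W"
          using iter_span[OF VDV DX, of l] XX' X'W
          by (metis (no_types, lifting) W_def le_sup_iff span_minimal subset_trans subspace_span)
        show ?thesis
        proof (intro exI conjI)
          show "\<forall>k. card (T k) \<le> s" using T'(1) G(1) unfolding T_def by simp
          show "l + K' + min (dim (X \<union> range (\<lambda>c. column c H)) - dim X) s \<le> dim V - dim X + 1"
          proof -
            have m1: "min (dim (X \<union> range (\<lambda>c. column c H)) - dim X) s = s"
              using rbs unfolding rb_def by simp
            have m2: "1 \<le> min (dim (X' \<union> range (\<lambda>c. column c H)) - dim X') s"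
              using rb1 s by simp
            show ?thesis unfolding m1 l_def using T'(2) m2 dX' dX'V by linarith
          qed
          show "V \<subseteq> span (X \<union> gen D H T (l + K'))" using \<open>V \<subseteq> W\<close> unfolding W_def .
        qed
      qed
    qed
  qed
qed

lemma mv_sum: "(A::real^'n^'m) *v sum f S = (\<Sum>j\<in>S. A *v f j)"
proof (induction S rule: infinite_finite_induct)
  case (insert x F) then show ?case by (simp add: matrix_vector_right_distrib)
qed auto

lemma traj_formula:
  "traj D H x0 h K = mat_pow D K *v x0 + (\<Sum>j\<in>{1..K}. mat_pow D (K - j) *v (H *v h j))"
proof (induction K)
  case 0 then show ?case by simp
next
  case (Suc K)
  have "traj D H x0 h (Suc K) = D *v traj D H x0 h K + H *v h (Suc K)" by simp
  also have "\<dots> = mat_pow D (Suc K) *v x0 + (\<Sum>j\<in>{1..K}. mat_pow D (Suc K - j) *v (H *v h j)) + H *v h (Suc K)"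
  proof -
    have "D *v (\<Sum>j\<in>{1..K}. mat_pow D (K - j) *v (H *v h j)) = (\<Sum>j\<in>{1..K}. mat_pow D (Suc K - j) *v (H *v h j))"
      unfolding mv_sum
    proof (rule sum.cong)
      fix j assume "j \<in> {1..K}"
      then have "Suc K - j = Suc (K - j)" by auto
      then show "D *v (mat_pow D (K - j) *v (H *v h j)) = mat_pow D (Suc K - j) *v (H *v h j)"
        by (simp only: mat_pow_Suc_mv)
    qed simp
    then show ?thesis unfolding Suc by (simp add: matrix_vector_right_distrib matrix_vector_mul_assoc)
  qed
  also have "\<dots> = mat_pow D (Suc K) *v x0 + (\<Sum>j\<in>{1..Suc K}. mat_pow D (Suc K - j) *v (H *v h j))"
    by (simp add: add.assoc)
  finally show ?case .
qed

definition ext :: "nat \<Rightarrow> (nat \<Rightarrow> 'l set) \<Rightarrow> nat \<Rightarrow> 'l set" where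
  "ext K f k = (if k < K then f k else {})"

lemma gen_ext: "gen D H (ext K T) K = gen D H T K"
  unfolding gen_def ext_def by auto

lemma gen_ext_mono: "K \<le> K' \<Longrightarrow> gen D H (ext K T) K' = gen D H T K"
  unfolding gen_def ext_def by auto

text \<open>From a spanning support pattern to steerability.\<close>

lemma reach_steer:
  fixes D :: "real^'n^'n" and H :: "real^'l^'n"
  assumes card: "\<forall>k. card (T k) \<le> s" and sp: "span (gen D H T K) = UNIV"
  shows "steerable_in D H s K"
proof -
  define R where "R = {\<Sum>j\<in>{1..K}. mat_pow D (K - j) *v (H *v u j) | u.
      \<forall>j\<in>{1..K}. \<forall>i. u j $ i \<noteq> 0 \<longrightarrow> i \<in> T (K - j)}"
  have sR: "subspace R"
    unfolding subspace_def
  proof (intro conjI ballI allI)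
    show "0 \<in> R" unfolding R_def by (intro CollectI exI[of _ "\<lambda>_. 0"]) auto
  next
    fix x y assume "x \<in> R" "y \<in> R"
    then obtain u v where u: "x = (\<Sum>j\<in>{1..K}. mat_pow D (K - j) *v (H *v u j))"
        "\<forall>j\<in>{1..K}. \<forall>i. u j $ i \<noteq> 0 \<longrightarrow> i \<in> T (K - j)"
      and v: "y = (\<Sum>j\<in>{1..K}. mat_pow D (K - j) *v (H *v v j))"
        "\<forall>j\<in>{1..K}. \<forall>i. v j $ i \<noteq> 0 \<longrightarrow> i \<in> T (K - j)"
      unfolding R_def by blast
    have "x + y = (\<Sum>j\<in>{1..K}. mat_pow D (K - j) *v (H *v (u j + v j)))"
      unfolding u v by (simp add: matrix_vector_right_distrib sum.distrib)
    moreover have "\<forall>j\<in>{1..K}. \<forall>i. (u j + v j) $ i \<noteq> 0 \<longrightarrow> i \<in> T (K - j)"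
    proof (intro ballI allI impI)
      fix j i assume j: "j \<in> {1..K}" and ne: "(u j + v j) $ i \<noteq> 0"
      then have "u j $ i \<noteq> 0 \<or> v j $ i \<noteq> 0" by auto
      then show "i \<in> T (K - j)" using u(2) v(2) j by blast
    qed
    ultimately show "x + y \<in> R" unfolding R_def mem_Collect_eq by (intro exI[of _ "\<lambda>j. u j + v j"] conjI)
  next
    fix c :: real and x assume "x \<in> R"
    then obtain u where u: "x = (\<Sum>j\<in>{1..K}. mat_pow D (K - j) *v (H *v u j))"
        "\<forall>j\<in>{1..K}. \<forall>i. u j $ i \<noteq> 0 \<longrightarrow> i \<in> T (K - j)"
      unfolding R_def by blast
    have "c *\<^sub>R x = (\<Sum>j\<in>{1..K}. mat_pow D (K - j) *v (H *v (c *\<^sub>R u j)))"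
      unfolding u by (simp add: matrix_vector_mult_scaleR scaleR_sum_right)
    moreover have "\<forall>j\<in>{1..K}. \<forall>i. (c *\<^sub>R u j) $ i \<noteq> 0 \<longrightarrow> i \<in> T (K - j)"
      using u(2) by auto
    ultimately show "c *\<^sub>R x \<in> R" unfolding R_def mem_Collect_eq by (intro exI[of _ "\<lambda>j. c *\<^sub>R u j"] conjI)
  qed
  have gR: "gen D H T K \<subseteq> R"
  proof
    fix x assume "x \<in> gen D H T K"
    then obtain k c where kc: "k < K" "c \<in> T k" "x = mat_pow D k *v column c H"
      unfolding gen_def by blast
    define u where "u j = (if j = K - k then axis c (1::real) else 0)" for j
    have jin: "K - k \<in> {1..K}" using kc by auto
    have "(\<Sum>j\<in>{1..K}. mat_pow D (K - j) *v (H *v u j)) =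
          (\<Sum>j\<in>{1..K}. if j = K - k then mat_pow D (K - j) *v (H *v axis c 1) else 0)"
      unfolding u_def by (rule sum.cong) auto
    also have "\<dots> = mat_pow D (K - (K - k)) *v (H *v axis c 1)"
      using jin by (simp add: sum.delta')
    also have "\<dots> = x" using kc by (simp add: matrix_vector_mult_basis)
    finally have "x = (\<Sum>j\<in>{1..K}. mat_pow D (K - j) *v (H *v u j))" by simp
    moreover have "\<forall>j\<in>{1..K}. \<forall>i. u j $ i \<noteq> 0 \<longrightarrow> i \<in> T (K - j)"
    proof (intro ballI allI impI)
      fix j i assume "j \<in> {1..K}" "u j $ i \<noteq> 0"
      then have "j = K - k" "i = c" unfolding u_def by (auto split: if_splits simp: axis_def)
      then show "i \<in> T (K - j)" using kc by auto
    qed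
    ultimately show "x \<in> R" unfolding R_def by blast
  qed
  have RU: "R = UNIV" using span_minimal[OF gR sR] sp by auto
  show ?thesis
    unfolding steerable_in_def
  proof (intro allI)
    fix x0 xf :: "real^'n"
    have "xf - mat_pow D K *v x0 \<in> R" using RU by simp
    then obtain u where u: "xf - mat_pow D K *v x0 = (\<Sum>j\<in>{1..K}. mat_pow D (K - j) *v (H *v u j))"
        "\<forall>j\<in>{1..K}. \<forall>i. u j $ i \<noteq> 0 \<longrightarrow> i \<in> T (K - j)"
      unfolding R_def by blast
    have "\<forall>k\<in>{1..K}. l0 (u k) \<le> s"
    proof
      fix k assume k: "k \<in> {1..K}"
      have "{j. u k $ j \<noteq> 0} \<subseteq> T (K - k)" using u(2) k by auto
      then have "card {j. u k $ j \<noteq> 0} \<le> card (T (K - k))" by (intro card_mono) auto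
      then show "l0 (u k) \<le> s" unfolding l0_def using card by (meson order_trans)
    qed
    moreover have "traj D H x0 u K = xf" unfolding traj_formula using u(1) by (simp add: algebra_simps)
    ultimately show "\<exists>h. (\<forall>k\<in>{1..K}. l0 (h k) \<le> s) \<and> traj D H x0 h K = xf" by blast
  qed
qed

lemma reach_steer_mono:
  fixes D :: "real^'n^'n" and H :: "real^'l^'n"
  assumes card: "\<forall>k. card (T k) \<le> s" and sp: "span (gen D H T K) = UNIV" and KK: "K \<le> K'"
  shows "steerable_in D H s K'"
proof (rule reach_steer)
  show "\<forall>k. card (ext K T k) \<le> s" using card unfolding ext_def by simp
  show "span (gen D H (ext K T) K') = UNIV" by (simp only: gen_ext_mono[OF KK] sp)
qed

text \<open>Covering lemma.\<close>

lemma cover_lemma: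
  fixes F :: "(real^'n) set set"
  assumes "countable F" "\<And>S. S \<in> F \<Longrightarrow> subspace S" "UNIV \<subseteq> \<Union>F"
  shows "\<exists>S\<in>F. S = UNIV"
proof (rule ccontr)
  assume nt: "\<not> ?thesis"
  have "negligible S" if "S \<in> F" for S
  proof -
    have "S \<noteq> UNIV" using nt that by blast
    then have "span S \<noteq> UNIV" using assms(2)[OF that] by (metis span_eq_iff)
    then have "dim S \<noteq> DIM(real^'n)" using dim_eq_full by blast
    then have "dim S < DIM(real^'n)" using dim_subset_UNIV[of S] by simp
    then show ?thesis by (rule negligible_lowdim)
  qed
  then have "negligible (\<Union>F)" using assms(1) by blast
  moreover have "\<Union>F = UNIV" using assms(3) by blast
  ultimately show False by simp
qed

definition fam :: "real^'n^'n \<Rightarrow> real^'l^'n \<Rightarrow> nat \<Rightarrow> nat \<Rightarrow> (real^'n) set set" where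
  "fam D H s K = (\<lambda>f. span (gen D H (ext K f) K)) ` {f \<in> {..<K} \<rightarrow>\<^sub>E UNIV. \<forall>k<K. card (f k) \<le> s}"

lemma fam_finite:
  fixes D :: "real^'n^'n" and H :: "real^'l^'n"
  shows "finite (fam D H s K)"
proof -
  have "finite ({..<K} \<rightarrow>\<^sub>E (UNIV :: 'l set set))" by (intro finite_PiE) auto
  then show ?thesis unfolding fam_def by auto
qed

lemma fam_sub: "S \<in> fam D H s K \<Longrightarrow> subspace S"
  unfolding fam_def by auto

lemma fam_good:
  assumes "S \<in> fam D H s K"
  shows "\<exists>T. (\<forall>k. card (T k) \<le> s) \<and> S = span (gen D H T K)"
proof -
  obtain f where f: "\<forall>k<K. card (f k) \<le> s" "S = span (gen D H (ext K f) K)"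
    using assms unfolding fam_def by auto
  then show ?thesis by (intro exI[of _ "ext K f"]) (auto simp: ext_def)
qed

lemma traj0_fam:
  fixes D :: "real^'n^'n" and H :: "real^'l^'n"
  assumes h: "\<forall>k\<in>{1..K}. l0 (h k) \<le> s"
  shows "traj D H 0 h K \<in> \<Union>(fam D H s K)"
proof -
  define f where "f = (\<lambda>k\<in>{..<K}. {i. h (K - k) $ i \<noteq> 0})"
  have fP: "f \<in> {..<K} \<rightarrow>\<^sub>E UNIV" unfolding f_def by auto
  have fc: "\<forall>k<K. card (f k) \<le> s"
  proof (intro allI impI)
    fix k assume "k < K"
    then have "K - k \<in> {1..K}" by auto
    then show "card (f k) \<le> s" using h \<open>k < K\<close> unfolding f_def l0_def by auto
  qed
  have "traj D H 0 h K \<in> span (gen D H (ext K f) K)"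
  proof -
    have "traj D H 0 h K = (\<Sum>j\<in>{1..K}. mat_pow D (K - j) *v (H *v h j))"
      unfolding traj_formula by simp
    also have "\<dots> \<in> span (gen D H (ext K f) K)"
    proof (rule span_sum)
      fix j assume j: "j \<in> {1..K}"
      have "H *v h j = (\<Sum>i\<in>UNIV. (h j $ i) *s column i H)" by (rule matrix_mult_sum)
      then have "mat_pow D (K - j) *v (H *v h j) = (\<Sum>i\<in>UNIV. mat_pow D (K - j) *v ((h j $ i) *\<^sub>R column i H))"
        by (simp only: mv_sum scalar_mult_eq_scaleR)
      also have "\<dots> = (\<Sum>i\<in>UNIV. (h j $ i) *\<^sub>R (mat_pow D (K - j) *v column i H))"
        by (simp only: matrix_vector_mult_scaleR)
      finally have "mat_pow D (K - j) *v (H *v h j) = (\<Sum>i\<in>UNIV. (h j $ i) *\<^sub>R (mat_pow D (K - j) *v column i H))" .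
      also have "\<dots> \<in> span (gen D H (ext K f) K)"
      proof (rule span_sum)
        fix i :: 'l
        show "(h j $ i) *\<^sub>R (mat_pow D (K - j) *v column i H) \<in> span (gen D H (ext K f) K)"
        proof (cases "h j $ i = 0")
          case True then show ?thesis by (simp add: span_zero)
        next
          case False
          have "K - j < K" "K - (K - j) = j" using j by auto
          then have "i \<in> ext K f (K - j)" using False unfolding ext_def f_def by auto
          then have "mat_pow D (K - j) *v column i H \<in> gen D H (ext K f) K"
            unfolding gen_def using \<open>K - j < K\<close> by blast
          then show ?thesis by (intro span_mul span_base)
        qed
      qed
      finally show "mat_pow D (K - j) *v (H *v h j) \<in> span (gen D H (ext K f) K)" .
    qed
    finally show ?thesis .
  qed
  then show ?thesis unfolding fam_def using fP fc by blast
qed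

lemma steer_reach:
  fixes D :: "real^'n^'n" and H :: "real^'l^'n"
  assumes "steerable_in D H s K"
  shows "\<exists>T. (\<forall>k. card (T k) \<le> s) \<and> span (gen D H T K) = UNIV"
proof -
  have "UNIV \<subseteq> \<Union>(fam D H s K)"
  proof
    fix xf :: "real^'n"
    obtain h where h: "\<forall>k\<in>{1..K}. l0 (h k) \<le> s" "traj D H 0 h K = xf"
      using assms unfolding steerable_in_def by blast
    show "xf \<in> \<Union>(fam D H s K)" using traj0_fam[where D=D and H=H, OF h(1)] h(2) by simp
  qed
  moreover have "countable (fam D H s K)" by (rule countable_finite[OF fam_finite])
  moreover have "\<And>S. S \<in> fam D H s K \<Longrightarrow> subspace S" by (rule fam_sub)
  ultimately obtain S where S: "S \<in> fam D H s K" "S = UNIV"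
    using cover_lemma[of "fam D H s K"] by blast
  obtain T where T: "\<forall>k. card (T k) \<le> s" "S = span (gen D H T K)" using fam_good[OF S(1)] by blast
  show ?thesis using T S(2) by blast
qed

lemma exists_steer:
  fixes D :: "real^'n^'n" and H :: "real^'l^'n"
  assumes "sparse_controllable D H s"
  shows "\<exists>K. steerable_in D H s K"
proof -
  have "UNIV \<subseteq> \<Union>(\<Union>K. fam D H s K)"
  proof
    fix xf :: "real^'n"
    obtain K h where h: "\<forall>k\<in>{1..K}. l0 (h k) \<le> s" "traj D H 0 h K = xf"
      using assms unfolding sparse_controllable_def by blast
    show "xf \<in> \<Union>(\<Union>K. fam D H s K)" using traj0_fam[where D=D and H=H, OF h(1)] h(2) by blast
  qed
  moreover have "countable (\<Union>K. fam D H s K)"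
    by (rule countable_UN) (auto intro!: countable_finite fam_finite)
  moreover have "\<And>S. S \<in> (\<Union>K. fam D H s K) \<Longrightarrow> subspace S" using fam_sub by blast
  ultimately obtain S where S: "S \<in> (\<Union>K. fam D H s K)" "S = UNIV"
    using cover_lemma[of "\<Union>K. fam D H s K"] by blast
  then obtain K where K: "S \<in> fam D H s K" by blast
  obtain T where T: "\<forall>k. card (T k) \<le> s" "S = span (gen D H T K)" using fam_good[OF K] by blast
  have "span (gen D H T K) = UNIV" using T(2) S(2) by simp
  then show ?thesis using reach_steer[OF T(1)] by blast
qed

lemma rank_cols: "rank (H::real^'l^'n) = dim (range (\<lambda>c. column c H))"
proof -
  have "columns H = range (\<lambda>c. column c H)" unfolding columns_def by auto
  then show ?thesis using column_rank_def[of H] by simp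
qed

lemma dim_UN_le:
  fixes L :: "nat \<Rightarrow> (real^'n) set"
  shows "dim (\<Union>k\<in>{..<K}. L k) \<le> (\<Sum>k<K. dim (L k))"
proof (induction K)
  case 0 then show ?case by simp
next
  case (Suc K)
  have "(\<Union>k\<in>{..<Suc K}. L k) = L K \<union> (\<Union>k\<in>{..<K}. L k)" by (auto simp: lessThan_Suc)
  then have "dim (\<Union>k\<in>{..<Suc K}. L k) \<le> dim (L K) + dim (\<Union>k\<in>{..<K}. L k)"
    using dim_Un_le by metis
  then show ?case using Suc by simp
qed

lemma dim_zero_set: "dim ({0::real^'n}) = 0"
  using dim_span[of "{0::real^'n}"] span_insert_0[of "{}::(real^'n) set"] by simp

lemma steer_pos:
  fixes D :: "real^'n^'n" and H :: "real^'l^'n"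
  assumes "steerable_in D H s K" shows "0 < K"
proof (rule ccontr)
  assume "\<not> 0 < K"
  then have K: "K = 0" by simp
  obtain i :: 'n where True by blast
  obtain h where "traj D H 0 h K = axis i (1::real)" using assms unfolding steerable_in_def by blast
  then show False using K by (simp add: axis_eq_0_iff)
qed

lemma lower_bound:
  fixes D :: "real^'n^'n" and H :: "real^'l^'n"
  assumes "steerable_in D H s K"
  shows "CARD('n) \<le> K * Rstar H s"
proof -
  obtain T where T: "\<forall>k. card (T k) \<le> s" "span (gen D H T K) = UNIV"
    using steer_reach[OF assms] by blast
  define L where "L k = (\<lambda>c. mat_pow D k *v column c H) ` T k" for k
  have genL: "gen D H T K = (\<Union>k\<in>{..<K}. L k)" unfolding gen_def L_def by auto
  have LR: "dim (L k) \<le> Rstar H s" for k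
  proof -
    have "dim (L k) \<le> card (L k)" by (rule dim_le_card[OF span_superset]) (simp add: L_def)
    also have "\<dots> \<le> card (T k)" unfolding L_def by (rule card_image_le) simp
    also have "\<dots> \<le> s" using T(1) by simp
    finally have 1: "dim (L k) \<le> s" .
    have "L k \<subseteq> (\<lambda>v. mat_pow D k *v v) ` range (\<lambda>c. column c H)" unfolding L_def by auto
    then have "dim (L k) \<le> dim ((\<lambda>v. mat_pow D k *v v) ` range (\<lambda>c. column c H))" by (rule dim_subset)
    also have "\<dots> \<le> dim (range (\<lambda>c. column c H))" by (rule dim_image_le) simp
    finally have 2: "dim (L k) \<le> rank H" unfolding rank_cols .
    show ?thesis using 1 2 unfolding Rstar_def by simp
  qed
  have "CARD('n) = dim (gen D H T K)"
    using T(2) dim_span[of "gen D H T K"] by simp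
  also have "\<dots> \<le> (\<Sum>k<K. dim (L k))" unfolding genL by (rule dim_UN_le)
  also have "\<dots> \<le> (\<Sum>k<K. Rstar H s)" by (rule sum_mono) (rule LR)
  also have "\<dots> = K * Rstar H s" by simp
  finally show ?thesis .
qed

lemma upper_NR:
  fixes D :: "real^'n^'n" and H :: "real^'l^'n"
  assumes s: "0 < s" and st: "steerable_in D H s K0"
  shows "steerable_in D H s (CARD('n) + 1 - Rstar H s)"
proof -
  have K0: "0 < K0" by (rule steer_pos[OF st])
  obtain T0 where T0: "\<forall>k. card (T0 k) \<le> s" "span (gen D H T0 K0) = UNIV"
    using steer_reach[OF st] by blast
  have genKr: "gen D H T0 K0 \<subseteq> Kr D H UNIV" unfolding gen_def Kr_def by auto
  have i: "span ({0} \<union> Kr D H UNIV) = UNIV"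
  proof -
    have "span (gen D H T0 K0) \<subseteq> span ({0} \<union> Kr D H UNIV)" using genKr by (intro span_mono) auto
    then show ?thesis using T0(2) by auto
  qed
  have genS: "gen D H T0 K0 \<subseteq> {0} \<union> (*v) D ` UNIV \<union> (\<lambda>c. column c H) ` T0 0"
  proof
    fix x assume "x \<in> gen D H T0 K0"
    then obtain k c where kc: "k < K0" "c \<in> T0 k" "x = mat_pow D k *v column c H"
      unfolding gen_def by blast
    show "x \<in> {0} \<union> (*v) D ` UNIV \<union> (\<lambda>c. column c H) ` T0 0"
    proof (cases k)
      case 0 then show ?thesis using kc by simp
    next
      case (Suc k')
      then have "x = D *v (mat_pow D k' *v column c H)" using kc(3) by (simp only: mat_pow_Suc_mv)
      then show ?thesis by blast
    qed
  qed
  have ii: "\<exists>S. card S \<le> s \<and> span ({0} \<union> (*v) D ` UNIV \<union> (\<lambda>c. column c H) ` S) = UNIV"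
  proof (intro exI conjI)
    show "card (T0 0) \<le> s" using T0(1) by simp
    have "span (gen D H T0 K0) \<subseteq> span ({0} \<union> (*v) D ` UNIV \<union> (\<lambda>c. column c H) ` T0 0)"
      using genS by (rule span_mono)
    then show "span ({0} \<union> (*v) D ` UNIV \<union> (\<lambda>c. column c H) ` T0 0) = UNIV" using T0(2) by auto
  qed
  obtain T K where TK: "\<forall>k. card (T k) \<le> s"
    "K + min (dim ({0} \<union> range (\<lambda>c. column c H)) - dim {0::real^'n}) s \<le> dim (UNIV::(real^'n) set) - dim {0::real^'n} + 1"
    "UNIV \<subseteq> span ({0} \<union> gen D H T K)"
    using main_lemma[OF s subspace_UNIV subspace_single_0 _ _ _ _ i ii] by auto
  have d1: "dim ({0} \<union> range (\<lambda>c. column c H)) = rank H"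
    unfolding rank_cols by (rule span_eq_dim) simp
  have Kb: "K \<le> CARD('n) + 1 - Rstar H s"
    using TK(2) unfolding d1 dim_zero_set Rstar_def by simp
  have "span (gen D H T K) = UNIV" using TK(3) span_insert_0[of "gen D H T K"] by auto
  then show ?thesis using reach_steer_mono[OF TK(1) _ Kb] by blast
qed

context finite_dimensional_vector_space
begin

lemma dep_seq:
  fixes f :: "nat \<Rightarrow> 'b"
  shows "\<exists>m c. f m = (\<Sum>j<m. scale (c j) (f j))"
proof -
  have ex: "\<exists>m. f m \<in> span (f ` {..<m})"
  proof (rule ccontr)
    assume nt: "\<not> ?thesis"
    have d: "dim (f ` {..<m}) = m" for m
    proof (induction m)
      case 0 then show ?case by simp
    next
      case (Suc m)
      have "f ` {..<Suc m} = insert (f m) (f ` {..<m})" by (auto simp: lessThan_Suc)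
      then show ?case using dim_insert[of "f m" "f ` {..<m}"] nt Suc by simp
    qed
    have "dim (f ` {..<Suc dimension}) \<le> dimension" by (rule dim_subset_UNIV)
    then show False using d by simp
  qed
  define m where "m = (LEAST m. f m \<in> span (f ` {..<m}))"
  have m: "f m \<in> span (f ` {..<m})" using LeastI_ex[OF ex] unfolding m_def .
  have inj: "inj_on f {..<m}"
  proof (rule inj_onI)
    fix i j assume ij: "i \<in> {..<m}" "j \<in> {..<m}" "f i = f j"
    show "i = j"
    proof (rule ccontr)
      assume "i \<noteq> j"
      then consider "i < j" | "j < i" by linarith
      then show False
      proof cases
        case 1
        then have "f j \<in> span (f ` {..<j})" using ij(3) by (metis lessThan_iff image_eqI span_base)
        moreover have "j < m" using ij by simp
        ultimately show False unfolding m_def using not_less_Least by blast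
      next
        case 2
        then have "f i \<in> span (f ` {..<i})" using ij(3) by (metis lessThan_iff image_eqI span_base)
        moreover have "i < m" using ij by simp
        ultimately show False unfolding m_def using not_less_Least by blast
      qed
    qed
  qed
  obtain u where u: "f m = (\<Sum>v\<in>f ` {..<m}. scale (u v) v)"
    using m span_finite[of "f ` {..<m}"] by auto
  also have "\<dots> = (\<Sum>j<m. scale (u (f j)) (f j))"
    by (subst sum.reindex[OF inj]) simp
  finally show ?thesis by (intro exI[of _ m] exI[of _ "\<lambda>j. u (f j)"])
qed

end

lemma mat_scale: "mat c ** (M::real^'n^'n) = c *\<^sub>R M"
proof -
  have e: "(if i = k then c else 0) * x = (if i = k then c * x else 0)" for i k :: 'n and x :: real
    by simp
  show ?thesis by (simp add: vec_eq_iff matrix_matrix_mult_def mat_def e)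
qed

lemma mv_sum_left: "sum f S *v (v::real^'n) = (\<Sum>j\<in>S. f j *v v)"
proof (induction S rule: infinite_finite_induct)
  case (insert x F) then show ?case by (simp add: matrix_vector_mult_add_rdistrib)
qed auto

lemma scale_mv: "(c *\<^sub>R M) *v (v::real^'n) = c *\<^sub>R (M *v v)"
  by (simp add: vec_eq_iff matrix_vector_mult_def sum_distrib_left mult.assoc)

lemma minpoly_exists:
  fixes D :: "real^'n^'n"
  shows "\<exists>p::real poly. lead_coeff p = 1 \<and> poly_mat p D = 0"
proof -
  obtain m c where mc: "mat_pow D m = (\<Sum>j<m. c j *\<^sub>R mat_pow D j)"
    using dep_seq[of "mat_pow D"] by blast
  define p :: "real poly" where "p = monom 1 m - (\<Sum>j<m. monom (c j) j)"
  have cp: "coeff p i = (if i = m then 1 else 0) - (if i < m then c i else 0)" for i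
    unfolding p_def by (simp add: coeff_sum)
  have dp: "degree p = m"
  proof (rule antisym)
    show "degree p \<le> m" by (rule degree_le) (simp add: cp)
    show "m \<le> degree p" by (rule le_degree) (simp add: cp)
  qed
  have lp: "lead_coeff p = 1" using dp cp by simp
  have "poly_mat p D = (\<Sum>i\<le>m. coeff p i *\<^sub>R mat_pow D i)"
    unfolding poly_mat_def dp by (simp add: mat_scale)
  also have "\<dots> = (\<Sum>i<Suc m. coeff p i *\<^sub>R mat_pow D i)" by (simp add: lessThan_Suc_atMost)
  also have "\<dots> = (\<Sum>i<m. coeff p i *\<^sub>R mat_pow D i) + mat_pow D m"
    using cp by simp
  also have "(\<Sum>i<m. coeff p i *\<^sub>R mat_pow D i) = - (\<Sum>i<m. c i *\<^sub>R mat_pow D i)"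
    by (simp add: cp sum_negf)
  finally have "poly_mat p D = 0" using mc by simp
  then show ?thesis using lp by blast
qed

lemma minpoly_rel:
  fixes D :: "real^'n^'n"
  assumes "lead_coeff p = 1" "poly_mat p D = 0" "degree p = q"
  shows "mat_pow D q *v v = - (\<Sum>i<q. coeff p i *\<^sub>R (mat_pow D i *v v))"
proof -
  have "0 = poly_mat p D *v v" using assms by simp
  also have "\<dots> = (\<Sum>i\<le>q. coeff p i *\<^sub>R (mat_pow D i *v v))"
    unfolding poly_mat_def assms(3) mv_sum_left
    by (simp add: mat_scale scale_mv)
  also have "\<dots> = (\<Sum>i<Suc q. coeff p i *\<^sub>R (mat_pow D i *v v))" by (simp add: lessThan_Suc_atMost)
  also have "\<dots> = (\<Sum>i<q. coeff p i *\<^sub>R (mat_pow D i *v v)) + mat_pow D q *v v"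
    using assms(1,3) by simp
  finally show ?thesis by (simp add: eq_neg_iff_add_eq_0 add.commute)
qed

lemma mp_all:
  fixes D :: "real^'n^'n"
  assumes p: "lead_coeff p = 1" "poly_mat p D = 0" "degree p = q"
  shows "mat_pow D j *v v \<in> span ((\<lambda>i. mat_pow D i *v v) ` {..<q})"
proof -
  define P where "P = (\<lambda>i. mat_pow D i *v v) ` {..<q}"
  have rel: "mat_pow D q *v v \<in> span P"
  proof -
    have "(\<Sum>i<q. coeff p i *\<^sub>R (mat_pow D i *v v)) \<in> span P"
      unfolding P_def by (intro span_sum span_mul span_base) auto
    then show ?thesis using minpoly_rel[OF p, of v] span_neg by metis
  qed
  have inv: "(*v) D ` span P \<subseteq> span P"
  proof (rule span_inv)
    show "(*v) D ` P \<subseteq> span P"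
    proof
      fix x assume "x \<in> (*v) D ` P"
      then obtain i where i: "i < q" "x = D *v (mat_pow D i *v v)" unfolding P_def by auto
      then have x: "x = mat_pow D (Suc i) *v v" by (simp only: mat_pow_Suc_mv)
      show "x \<in> span P"
      proof (cases "Suc i < q")
        case True
        have "mat_pow D (Suc i) *v v \<in> P" unfolding P_def using True
          by (intro image_eqI[where x="Suc i"]) (simp_all del: mat_pow.simps)
        then show ?thesis unfolding x by (rule span_base)
      next
        case False then have "Suc i = q" using i by simp
        then show ?thesis using x rel by simp
      qed
    qed
  qed
  show ?thesis unfolding P_def[symmetric]
  proof (induction j)
    case 0
    show ?case
    proof (cases "0 < q")
      case True then show ?thesis unfolding P_def by (intro span_base image_eqI[where x=0]) simp_all
    next
      case False then show ?thesis using rel by simp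
    qed
  next
    case (Suc j)
    have "mat_pow D (Suc j) *v v = D *v (mat_pow D j *v v)" by (simp only: mat_pow_Suc_mv)
    then show ?case using inv Suc by blast
  qed
qed

lemma card_div_block:
  assumes "0 < (s::nat)"
  shows "card {i::nat. i < n \<and> i div s = l} \<le> s"
proof -
  have "{i::nat. i < n \<and> i div s = l} \<subseteq> (\<lambda>j. l * s + j) ` {..<s}"
  proof
    fix i assume "i \<in> {i::nat. i < n \<and> i div s = l}"
    then have "i = l * s + i mod s" "i mod s < s" using assms
      by (auto simp: mult.commute)
    then show "i \<in> (\<lambda>j. l * s + j) ` {..<s}" by blast
  qed
  then have "card {i::nat. i < n \<and> i div s = l} \<le> card ((\<lambda>j. l * s + j) ` {..<s})"
    by (intro card_mono) auto
  also have "\<dots> \<le> s" using card_image_le[of "{..<s}" "\<lambda>j. l * s + j"] by simp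
  finally show ?thesis .
qed

lemma q_construct:
  fixes D :: "real^'n^'n" and H :: "real^'l^'n" and s :: nat
  assumes s: "0 < s"
    and kal: "span (Kr D H S) = UNIV"
    and G0: "G0 \<subseteq> S" "card G0 \<le> s" "span (range ((*v) D) \<union> (\<lambda>c. column c H) ` G0) = UNIV"
    and p: "lead_coeff p = 1" "poly_mat p D = 0" "degree p = q" and q1: "1 \<le> q"
    and g: "card S \<le> g * s" "1 \<le> g"
  shows "steerable_in D H s (q * g)"
proof -
  have fS: "finite S" by simp
  define a where "a = card G0"
  have fG0: "finite G0" using finite_subset[OF G0(1) fS] .
  obtain e1 where e1: "bij_betw e1 {0..<a} G0" unfolding a_def using ex_bij_betw_nat_finite[OF fG0] by (elim exE)
  have fSG: "finite (S - G0)" using fS by simp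
  obtain e2 where e2: "bij_betw e2 {0..<card (S - G0)} (S - G0)" using ex_bij_betw_nat_finite[OF fSG] by (elim exE)
  have cardSG: "card (S - G0) = card S - a" unfolding a_def using G0(1) by (simp add: card_Diff_subset)
  have aS: "a \<le> card S" unfolding a_def using G0(1) by (simp add: card_mono)
  define e where "e i = (if i < a then e1 i else e2 (i - a))" for i
  define Gr where "Gr l = e ` {i. i < card S \<and> i div s = l}" for l
  define K where "K = q * g"
  define T where "T k = Gr (k div q)" for k
  have cardT: "\<forall>k. card (T k) \<le> s"
  proof
    fix k
    have "card (T k) \<le> card {i. i < card S \<and> i div s = k div q}"
      unfolding T_def Gr_def by (rule card_image_le) simp
    also have "\<dots> \<le> s" by (rule card_div_block[OF s])
    finally show "card (T k) \<le> s" .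
  qed
  have G0Gr: "G0 \<subseteq> Gr 0"
  proof
    fix x assume "x \<in> G0"
    then obtain i where i: "i < a" "x = e1 i" using e1 unfolding bij_betw_def by auto
    have "i < card S" "i div s = 0" using i aS G0(2) unfolding a_def by auto
    then show "x \<in> Gr 0" unfolding Gr_def e_def using i by auto
  qed
  have SGr: "\<exists>l<g. c \<in> Gr l" if cS: "c \<in> S" for c
  proof (cases "c \<in> G0")
    case True
    then have "c \<in> Gr 0" using G0Gr by blast
    moreover have "0 < g" using g(2) by simp
    ultimately show ?thesis by blast
  next
    case False
    have "c \<in> e2 ` {0..<card (S - G0)}" using e2 cS False unfolding bij_betw_def by auto
    then obtain j0 where j0: "j0 \<in> {0..<card (S - G0)}" "c = e2 j0" by blast
    then have j: "j0 < card S - a" "c = e2 j0" using cardSG by auto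
    define i where "i = a + j0"
    have i: "i < card S" "e i = c" using j unfolding i_def e_def by auto
    have "i div s < g" using i(1) g(1) by (metis less_le_trans less_mult_imp_div_less)
    then show ?thesis using i unfolding Gr_def by auto
  qed
  define P where "P = span (gen D H T K)"
  have lev: "mat_pow D (l * q + i) *v column c H \<in> P" if "l < g" "i < q" "c \<in> Gr l" for l i c
  proof -
    have "l * q + i < Suc l * q" using that(2) by simp
    also have "\<dots> \<le> g * q" using that(1) by (intro mult_right_mono) auto
    finally have "l * q + i < K" unfolding K_def by (simp add: mult.commute)
    moreover have "(l * q + i) div q = l" using that q1 by simp
    ultimately have "mat_pow D (l * q + i) *v column c H \<in> gen D H T K"
      unfolding gen_def T_def using that(3) by (intro CollectI exI[of _ "l * q + i"] exI[of _ c]) simp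
    then show ?thesis unfolding P_def by (rule span_base)
  qed
  have blk: "mat_pow D (l * q) *v (mat_pow D j *v column c H) \<in> P" if "l < g" "c \<in> Gr l" for l j c
  proof -
    have "mat_pow D j *v column c H \<in> span ((\<lambda>i. mat_pow D i *v column c H) ` {..<q})"
      by (rule mp_all[OF p])
    then have "mat_pow D (l * q) *v (mat_pow D j *v column c H) \<in>
        (*v) (mat_pow D (l * q)) ` span ((\<lambda>i. mat_pow D i *v column c H) ` {..<q})" by blast
    also have "\<dots> = span ((*v) (mat_pow D (l * q)) ` (\<lambda>i. mat_pow D i *v column c H) ` {..<q})"
      by (rule span_image_mv)
    also have "\<dots> \<subseteq> P"
    proof (rule span_minimal)
      show "(*v) (mat_pow D (l * q)) ` (\<lambda>i. mat_pow D i *v column c H) ` {..<q} \<subseteq> P"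
      proof
        fix x assume "x \<in> (*v) (mat_pow D (l * q)) ` (\<lambda>i. mat_pow D i *v column c H) ` {..<q}"
        then obtain i where i: "i < q" "x = mat_pow D (l * q) *v (mat_pow D i *v column c H)" by auto
        then have "x = mat_pow D (l * q + i) *v column c H" by (simp only: mat_pow_add_mv)
        then show "x \<in> P" using lev[OF that(1) i(1) that(2)] by simp
      qed
      show "subspace P" unfolding P_def by simp
    qed
    finally show ?thesis .
  qed
  define P0 where "P0 m = {mat_pow D i *v column c H | i c. i < m \<and> c \<in> G0}" for m
  have alpha: "UNIV \<subseteq> span (P0 m \<union> range ((*v) (mat_pow D m)))" for m
  proof (induction m)
    case 0 then show ?case using span_sup2[of "range ((*v) (mat_pow D 0))" "P0 0"] by auto
  next
    case (Suc m)
    have "range ((*v) (mat_pow D m)) = (*v) (mat_pow D m) ` span (range ((*v) D) \<union> (\<lambda>c. column c H) ` G0)"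
      using G0(3) by simp
    also have "\<dots> = span ((*v) (mat_pow D m) ` (range ((*v) D) \<union> (\<lambda>c. column c H) ` G0))"
      by (rule span_image_mv)
    also have "\<dots> \<subseteq> span (P0 (Suc m) \<union> range ((*v) (mat_pow D (Suc m))))"
    proof (rule span_mono)
      show "(*v) (mat_pow D m) ` (range ((*v) D) \<union> (\<lambda>c. column c H) ` G0) \<subseteq> P0 (Suc m) \<union> range ((*v) (mat_pow D (Suc m)))"
      proof
        fix x assume "x \<in> (*v) (mat_pow D m) ` (range ((*v) D) \<union> (\<lambda>c. column c H) ` G0)"
        then obtain y where y: "y \<in> range ((*v) D) \<union> (\<lambda>c. column c H) ` G0" "x = mat_pow D m *v y" by blast
        show "x \<in> P0 (Suc m) \<union> range ((*v) (mat_pow D (Suc m)))"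
        proof (cases "y \<in> range ((*v) D)")
          case True
          then obtain z where "y = D *v z" by blast
          then have "x = mat_pow D (Suc m) *v z" using y(2) by (simp only: mat_pow_Suc_mv')
          then show ?thesis by blast
        next
          case False
          then obtain c where "c \<in> G0" "y = column c H" using y(1) by blast
          then show ?thesis unfolding P0_def using y(2) by blast
        qed
      qed
    qed
    finally have 1: "range ((*v) (mat_pow D m)) \<subseteq> span (P0 (Suc m) \<union> range ((*v) (mat_pow D (Suc m))))" .
    have "P0 m \<subseteq> P0 (Suc m)" unfolding P0_def by (blast intro: less_SucI)
    then have 2: "P0 m \<subseteq> span (P0 (Suc m) \<union> range ((*v) (mat_pow D (Suc m))))"
      using span_sup1[of "P0 (Suc m)" "range ((*v) (mat_pow D (Suc m)))"] by blast
    have "span (P0 m \<union> range ((*v) (mat_pow D m))) \<subseteq> span (P0 (Suc m) \<union> range ((*v) (mat_pow D (Suc m))))"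
      using 1 2 by (intro span_minimal) auto
    then show ?case using Suc by blast
  qed
  have P0P: "P0 K \<subseteq> P"
  proof
    fix x assume "x \<in> P0 K"
    then obtain i c where ic: "c \<in> G0" "x = mat_pow D i *v column c H" unfolding P0_def by blast
    have "x = mat_pow D (0 * q) *v (mat_pow D i *v column c H)" using ic by simp
    then show "x \<in> P" using blk[of 0 c i] G0Gr ic g(2) by auto
  qed
  have RP: "range ((*v) (mat_pow D K)) \<subseteq> P"
  proof -
    have "range ((*v) (mat_pow D K)) = (*v) (mat_pow D K) ` span (Kr D H S)" using kal by simp
    also have "\<dots> = span ((*v) (mat_pow D K) ` Kr D H S)" by (rule span_image_mv)
    also have "\<dots> \<subseteq> P"
    proof (rule span_minimal)
      show "(*v) (mat_pow D K) ` Kr D H S \<subseteq> P"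
      proof
        fix x assume "x \<in> (*v) (mat_pow D K) ` Kr D H S"
        then obtain j c where jc: "c \<in> S" "x = mat_pow D K *v (mat_pow D j *v column c H)"
          unfolding Kr_def by blast
        obtain l where l: "l < g" "c \<in> Gr l" using SGr[OF jc(1)] by blast
        have "l * q \<le> K" unfolding K_def using l(1) by (simp add: mult.commute)
        then have "K = l * q + (K - l * q)" by simp
        then have "x = mat_pow D (l * q) *v (mat_pow D (K - l * q + j) *v column c H)"
          using jc(2) by (metis mat_pow_add_mv add.assoc)
        then show "x \<in> P" using blk[OF l] by simp
      qed
      show "subspace P" unfolding P_def by simp
    qed
    finally show ?thesis .
  qed
  have "UNIV \<subseteq> P"
  proof -
    have "span (P0 K \<union> range ((*v) (mat_pow D K))) \<subseteq> P"
      using P0P RP unfolding P_def by (intro span_minimal) auto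
    then show ?thesis using alpha[of K] by blast
  qed
  then have "span (gen D H T K) = UNIV" unfolding P_def by blast
  then show ?thesis using reach_steer[OF cardT] unfolding K_def by blast
qed

definition pair :: "complex^'n \<Rightarrow> real^'n \<Rightarrow> complex" where
  "pair w x = (\<Sum>i\<in>UNIV. w $ i * complex_of_real (x $ i))"

definition Aop :: "real^'n^'n \<Rightarrow> complex^'n \<Rightarrow> complex^'n" where
  "Aop D w = (\<chi> j. \<Sum>i\<in>UNIV. w $ i * complex_of_real (D $ i $ j))"

lemma pair_D: "pair w (D *v x) = pair (Aop D w) x"
proof -
  have "pair w (D *v x) = (\<Sum>i\<in>UNIV. \<Sum>j\<in>UNIV. w $ i * complex_of_real (D $ i $ j) * complex_of_real (x $ j))"
    unfolding pair_def matrix_vector_mult_def by (simp add: sum_distrib_left mult.assoc)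
  also have "\<dots> = (\<Sum>j\<in>UNIV. \<Sum>i\<in>UNIV. w $ i * complex_of_real (D $ i $ j) * complex_of_real (x $ j))"
    by (rule sum.swap)
  also have "\<dots> = pair (Aop D w) x"
    unfolding pair_def Aop_def by (simp add: sum_distrib_right)
  finally show ?thesis .
qed

lemma pair_add: "pair (w + w') x = pair w x + pair w' x"
  unfolding pair_def by (simp add: distrib_right sum.distrib)

lemma pair_scale: "pair (c *s w) x = c * pair w x"
  unfolding pair_def by (simp add: sum_distrib_left mult.assoc)

lemma pair_zero: "pair 0 x = 0"
  unfolding pair_def by simp

lemma Aop_add: "Aop D (w + w') = Aop D w + Aop D w'"
  unfolding Aop_def by (simp add: vec_eq_iff distrib_right sum.distrib)

lemma Aop_scale: "Aop D (c *s w) = c *s Aop D w"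
  unfolding Aop_def by (simp add: vec_eq_iff sum_distrib_left mult.assoc)

lemma Aop_zero: "Aop D 0 = 0"
  unfolding Aop_def by (simp add: vec_eq_iff)

lemma Aop_sum: "Aop D (sum f A) = (\<Sum>a\<in>A. Aop D (f a))"
proof (induction A rule: infinite_finite_induct)
  case (insert x F) then show ?case by (simp add: Aop_add)
qed (auto simp: Aop_zero)

definition Wset :: "real^'n^'n \<Rightarrow> real^'l^'n \<Rightarrow> 'l set \<Rightarrow> (complex^'n) set" where
  "Wset D H S = {w. \<forall>k c. c \<in> S \<longrightarrow> pair w (mat_pow D k *v column c H) = 0}"

lemma W_zero: "0 \<in> Wset D H S"
  unfolding Wset_def by (simp add: pair_zero)

lemma W_add: "w \<in> Wset D H S \<Longrightarrow> w' \<in> Wset D H S \<Longrightarrow> w + w' \<in> Wset D H S"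
  unfolding Wset_def by (simp add: pair_add)

lemma W_scale: "w \<in> Wset D H S \<Longrightarrow> c *s w \<in> Wset D H S"
  unfolding Wset_def by (simp add: pair_scale)

lemma W_sum: "(\<And>a. a \<in> A \<Longrightarrow> f a \<in> Wset D H S) \<Longrightarrow> sum f A \<in> Wset D H S"
proof (induction A rule: infinite_finite_induct)
  case (insert x F) then show ?case by (simp add: W_add)
qed (auto simp: W_zero)

lemma W_Aop: "w \<in> Wset D H S \<Longrightarrow> Aop D w \<in> Wset D H S"
  unfolding Wset_def
proof (intro CollectI allI impI)
  fix k c assume w: "w \<in> {w. \<forall>k c. c \<in> S \<longrightarrow> pair w (mat_pow D k *v column c H) = 0}" and c: "c \<in> S"
  have "pair (Aop D w) (mat_pow D k *v column c H) = pair w (D *v (mat_pow D k *v column c H))"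
    by (simp add: pair_D)
  also have "\<dots> = pair w (mat_pow D (Suc k) *v column c H)" by (simp only: mat_pow_Suc_mv)
  also have "\<dots> = 0" using w c by blast
  finally show "pair (Aop D w) (mat_pow D k *v column c H) = 0" .
qed

lemma W_Aop_pow: "w \<in> Wset D H S \<Longrightarrow> (Aop D ^^ i) w \<in> Wset D H S"
  by (induction i) (auto simp: W_Aop)

definition peval :: "real^'n^'n \<Rightarrow> complex poly \<Rightarrow> complex^'n \<Rightarrow> complex^'n" where
  "peval D p w = (\<Sum>i\<le>degree p. coeff p i *s (Aop D ^^ i) w)"

lemma peval_W: "w \<in> Wset D H S \<Longrightarrow> peval D p w \<in> Wset D H S"
  unfolding peval_def by (intro W_sum W_scale W_Aop_pow)

lemma peval_bound:
  assumes "degree p \<le> n"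
  shows "peval D p w = (\<Sum>i\<le>n. coeff p i *s (Aop D ^^ i) w)"
proof -
  have "(\<Sum>i\<le>n. coeff p i *s (Aop D ^^ i) w) = (\<Sum>i\<le>degree p. coeff p i *s (Aop D ^^ i) w) + (\<Sum>i\<in>{degree p<..n}. coeff p i *s (Aop D ^^ i) w)"
  proof -
    have "{..n} = {..degree p} \<union> {degree p<..n}" using assms by auto
    then have "(\<Sum>i\<le>n. coeff p i *s (Aop D ^^ i) w) = (\<Sum>i\<in>{..degree p} \<union> {degree p<..n}. coeff p i *s (Aop D ^^ i) w)"
      by simp
    also have "\<dots> = (\<Sum>i\<le>degree p. coeff p i *s (Aop D ^^ i) w) + (\<Sum>i\<in>{degree p<..n}. coeff p i *s (Aop D ^^ i) w)"
      by (rule sum.union_disjoint) auto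
    finally show ?thesis .
  qed
  also have "(\<Sum>i\<in>{degree p<..n}. coeff p i *s (Aop D ^^ i) w) = 0"
    by (intro sum.neutral) (auto simp: coeff_eq_0)
  finally show ?thesis unfolding peval_def by simp
qed

lemma peval_linfactor: "peval D ([:-r, 1:] * q) w = Aop D (peval D q w) - r *s peval D q w"
proof -
  define n where "n = Suc (degree q)"
  have e: "[:-r, 1:] * q = smult (-r) q + pCons 0 q" by simp
  have d1: "degree ([:-r, 1:] * q) \<le> n" unfolding n_def
    using degree_mult_le[of "[:-r, 1:]" q] by simp
  have d2: "degree q \<le> n" unfolding n_def by simp
  have "peval D ([:-r, 1:] * q) w = (\<Sum>i\<le>n. coeff ([:-r, 1:] * q) i *s (Aop D ^^ i) w)"
    by (rule peval_bound[OF d1])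
  also have "\<dots> = (\<Sum>i\<le>n. (-r * coeff q i) *s (Aop D ^^ i) w + coeff (pCons 0 q) i *s (Aop D ^^ i) w)"
    unfolding e by (simp only: coeff_add coeff_smult vector_sadd_rdistrib)
  also have "\<dots> = (\<Sum>i\<le>n. (-r * coeff q i) *s (Aop D ^^ i) w) + (\<Sum>i\<le>n. coeff (pCons 0 q) i *s (Aop D ^^ i) w)"
    by (rule sum.distrib)
  also have "(\<Sum>i\<le>n. (-r * coeff q i) *s (Aop D ^^ i) w) = - r *s peval D q w"
    unfolding peval_bound[OF d2] by (simp add: vec_eq_iff sum_distrib_left mult.assoc sum_negf)
  also have "(\<Sum>i\<le>n. coeff (pCons 0 q) i *s (Aop D ^^ i) w) = Aop D (peval D q w)"
  proof -
    have "(\<Sum>i\<le>n. coeff (pCons 0 q) i *s (Aop D ^^ i) w) = (\<Sum>i\<le>degree q. coeff q i *s (Aop D ^^ Suc i) w)"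
      unfolding n_def sum.atMost_Suc_shift by simp
    also have "\<dots> = Aop D (peval D q w)"
      unfolding peval_def Aop_sum by (simp add: Aop_scale)
    finally show ?thesis .
  qed
  finally show ?thesis by (simp add: vec_eq_iff)
qed

lemma eig_exists:
  assumes w: "w \<in> Wset D H S" "w \<noteq> 0"
  shows "p \<noteq> 0 \<Longrightarrow> peval D p w = 0 \<Longrightarrow> \<exists>v z. v \<in> Wset D H S \<and> v \<noteq> 0 \<and> Aop D v = z *s v"
proof (induction "degree p" arbitrary: p rule: less_induct)
  case less
  show ?case
  proof (cases "degree p = 0")
    case True
    have "peval D p w = coeff p 0 *s w" unfolding peval_def True by simp
    moreover have "coeff p 0 \<noteq> 0" using True less.prems(1) by (metis leading_coeff_0_iff)
    ultimately have "peval D p w \<noteq> 0" using w(2) by (simp add: vec_eq_iff)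
    then show ?thesis using less.prems(2) by simp
  next
    case False
    then have "\<not> constant (poly p)" by (simp add: constant_degree)
    then obtain r where "poly p r = 0" using fundamental_theorem_of_algebra by blast
    then have "[:-r, 1:] dvd p" using poly_eq_0_iff_dvd by blast
    then obtain q where q: "p = [:-r, 1:] * q" by (elim dvdE)
    have q0: "q \<noteq> 0" using less.prems(1) q by auto
    have dq: "degree q < degree p" using q q0 degree_mult_eq[of "[:-r, 1:]" q] by simp
    define u where "u = peval D q w"
    have uW: "u \<in> Wset D H S" unfolding u_def by (rule peval_W[OF w(1)])
    have rel: "Aop D u - r *s u = 0" using less.prems(2) unfolding q peval_linfactor u_def .
    show ?thesis
    proof (cases "u = 0")
      case True
      then show ?thesis using less.hyps[OF dq q0] unfolding u_def by blast
    next
      case False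
      have "Aop D u = r *s u" using rel by (simp add: vec_eq_iff)
      then show ?thesis using uW False by blast
    qed
  qed
qed

lemma eig_from_W:
  fixes D :: "real^'n^'n" and H :: "real^'l^'n"
  assumes w: "w \<in> Wset D H S" "w \<noteq> 0"
  shows "\<exists>v z. v \<in> Wset D H S \<and> v \<noteq> 0 \<and> Aop D v = z *s v"
proof -
  define f where "f j = (Aop D ^^ j) w" for j
  obtain m c where mc: "f m = (\<Sum>j<m. c j *s f j)"
    using vec.dep_seq[of f] by blast
  define p :: "complex poly" where "p = monom 1 m - (\<Sum>j<m. monom (c j) j)"
  have cp: "coeff p i = (if i = m then 1 else 0) - (if i < m then c i else 0)" for i
    unfolding p_def by (simp add: coeff_sum)
  have dp: "degree p = m"
  proof (rule antisym)
    show "degree p \<le> m" by (rule degree_le) (simp add: cp)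
    show "m \<le> degree p" by (rule le_degree) (simp add: cp)
  qed
  have p0: "p \<noteq> 0" using cp[of m] by auto
  have "peval D p w = (\<Sum>i\<le>m. coeff p i *s f i)" unfolding peval_def dp f_def by simp
  also have "\<dots> = (\<Sum>i<Suc m. coeff p i *s f i)" by (simp add: lessThan_Suc_atMost)
  also have "\<dots> = (\<Sum>i<m. coeff p i *s f i) + f m" using cp by simp
  also have "(\<Sum>i<m. coeff p i *s f i) = (\<Sum>i<m. (- c i) *s f i)"
    by (rule sum.cong) (simp_all add: cp)
  also have "(\<Sum>i<m. (- c i) *s f i) + f m = (\<Sum>i<m. (- c i) *s f i + c i *s f i)"
    unfolding mc sum.distrib ..
  also have "\<dots> = 0" by (simp add: vector_sadd_rdistrib[symmetric])
  finally have "peval D p w = 0" .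
  then show ?thesis using eig_exists[OF w p0] by blast
qed

lemma rank_lt:
  fixes M :: "'a::field^'m^'n"
  assumes v: "v \<noteq> 0" and vM: "v v* M = 0"
  shows "rank M < CARD('n)"
proof -
  obtain i0 where i0: "v $ i0 \<noteq> 0" using v by (metis vec_eq_iff zero_index)
  define R' where "R' = (\<lambda>i. row i M) ` (UNIV - {i0})"
  have comb: "row i0 M = (\<Sum>i\<in>UNIV - {i0}. (- v$i / v$i0) *s row i M)"
  proof (subst vec_eq_iff, intro allI)
    fix j
    have "(\<Sum>i\<in>UNIV. v$i * M$i$j) = 0" using vM by (simp add: vec_eq_iff vector_matrix_mult_def)
    then have "v$i0 * M$i0$j + (\<Sum>i\<in>UNIV - {i0}. v$i * M$i$j) = 0"
      by (simp add: sum.remove[of UNIV i0])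
    then have "v$i0 * M$i0$j = - (\<Sum>i\<in>UNIV - {i0}. v$i * M$i$j)"
      by (simp add: eq_neg_iff_add_eq_0)
    then have eqn: "v$i0 * M$i0$j = - (\<Sum>i\<in>UNIV - {i0}. v$i * M$i$j)" .
    have "M$i0$j = (v$i0 * M$i0$j) / v$i0" using i0 by simp
    also have "\<dots> = - (\<Sum>i\<in>UNIV - {i0}. v$i * M$i$j) / v$i0" by (simp only: eqn)
    also have "\<dots> = (\<Sum>i\<in>UNIV - {i0}. (- v$i / v$i0) * M$i$j)"
      by (simp add: sum_divide_distrib sum_negf)
    finally show "row i0 M $ j = (\<Sum>i\<in>UNIV - {i0}. (- v$i / v$i0) *s row i M) $ j"
      by (simp add: row_def sum_component)
  qed
  have "row i0 M \<in> vec.span R'" unfolding comb R'_def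
    by (intro vec.span_sum vec.span_scale vec.span_base) auto
  then have "rows M \<subseteq> vec.span R'"
  proof -
    assume r0: "row i0 M \<in> vec.span R'"
    show ?thesis
    proof
      fix x assume "x \<in> rows M"
      then obtain i where x: "x = row i M" unfolding rows_def by blast
      show "x \<in> vec.span R'"
      proof (cases "i = i0")
        case True then show ?thesis using r0 x by simp
      next
        case False
        then have "x \<in> R'" unfolding R'_def x by blast
        then show ?thesis by (rule vec.span_base)
      qed
    qed
  qed
  then have "vec.dim (rows M) \<le> card R'" by (rule vec.dim_le_card) (simp add: R'_def)
  also have "\<dots> \<le> card (UNIV - {i0 :: 'n})" unfolding R'_def by (rule card_image_le) simp
  also have "\<dots> < CARD('n)" by (simp add: card_Diff_subset)
  finally show ?thesis by (simp add: row_rank_def_gen)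
qed

lemma vm_rows: "x v* M = (\<Sum>i\<in>UNIV. x$i *s row i M)"
  by (simp add: vec_eq_iff vector_matrix_mult_def sum_component row_def)

lemma rank_full:
  fixes M :: "'a::field^'m^'n"
  assumes inj0: "\<And>v. v v* M = 0 \<Longrightarrow> v = 0"
  shows "rank M = CARD('n)"
proof -
  have injr: "inj (\<lambda>i. row i M)"
  proof (rule injI)
    fix i j assume eq: "row i M = row j M"
    show "i = j"
    proof (rule ccontr)
      assume ne: "i \<noteq> j"
      define v :: "'a^'n" where "v = axis i 1 - axis j 1"
      have "v v* M = 0"
      proof (subst vec_eq_iff, intro allI)
        fix k
        have e: "(axis i 1 - axis j 1) $ x * M$x$k = (if x = i then M$x$k else 0) - (if x = j then M$x$k else 0)" for x
          by (simp add: axis_def)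
        have "(v v* M) $ k = (\<Sum>x\<in>UNIV. (if x = i then M$x$k else 0)) - (\<Sum>x\<in>UNIV. (if x = j then M$x$k else 0))"
          unfolding v_def vector_matrix_mult_def by (simp only: vec_lambda_beta e sum_subtractf)
        also have "\<dots> = M$i$k - M$j$k" by simp
        also have "\<dots> = 0" using eq by (simp add: vec_eq_iff row_def)
        finally show "(v v* M) $ k = 0 $ k" by simp
      qed
      then have "v = 0" by (rule inj0)
      then show False using ne unfolding v_def by (simp add: vec_eq_iff axis_def) (metis one_neq_zero)
    qed
  qed
  have ind: "vec.independent (rows M)"
  proof
    assume "vec.dependent (rows M)"
    then obtain t u where t: "finite t" "t \<subseteq> rows M" "(\<Sum>v\<in>t. u v *s v) = 0" "\<exists>v\<in>t. u v \<noteq> 0"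
      unfolding vec.dependent_explicit by blast
    define I where "I = {i. row i M \<in> t}"
    define x :: "'a^'n" where "x = (\<chi> i. if i \<in> I then u (row i M) else 0)"
    have tI: "t = (\<lambda>i. row i M) ` I" using t(2) unfolding I_def rows_def by auto
    have "x v* M = (\<Sum>i\<in>UNIV. x$i *s row i M)" by (rule vm_rows)
    also have "\<dots> = (\<Sum>i\<in>UNIV. if i \<in> I then u (row i M) *s row i M else 0)"
      by (rule sum.cong) (auto simp: x_def)
    also have "\<dots> = (\<Sum>i\<in>I. u (row i M) *s row i M)"
      by (simp add: sum.If_cases)
    also have "\<dots> = (\<Sum>v\<in>t. u v *s v)" unfolding tI
      using sum.reindex[of "\<lambda>i. row i M" I "\<lambda>v. u v *s v"] inj_on_subset[OF injr subset_UNIV, of I]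
      by simp
    also have "\<dots> = 0" by (rule t(3))
    finally have x0: "x = 0" by (rule inj0)
    obtain v0 where v0: "v0 \<in> t" "u v0 \<noteq> 0" using t(4) by blast
    obtain i where i: "i \<in> I" "v0 = row i M" using v0(1) tI by blast
    have "x $ i = u v0" unfolding x_def using i by simp
    then show False using x0 v0(2) by simp
  qed
  have rr: "rows M = range (\<lambda>i. row i M)" unfolding rows_def by auto
  have "vec.dim (rows M) = card (rows M)" by (rule vec.dim_eq_card_independent[OF ind])
  also have "\<dots> = CARD('n)" unfolding rr using injr by (simp add: card_image)
  finally show ?thesis by (simp add: row_rank_def_gen)
qed

lemma pbh_entry: "pbh_block D H S z $ i $ c = (case c of
       Inl j \<Rightarrow> complex_of_real (D $ i $ j) - (if i = j then z else 0)
     | Inr j \<Rightarrow> (if j \<in> S then complex_of_real (H $ i $ j) else 0))"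
  unfolding pbh_block_def by simp

lemma vm_pbh_Inl: "(v v* pbh_block D H S z) $ Inl j = Aop D v $ j - z * v $ j"
proof -
  have "(v v* pbh_block D H S z) $ Inl j = (\<Sum>i\<in>UNIV. v$i * complex_of_real (D $ i $ j) - (if i = j then v$i * z else 0))"
  proof -
    have e: "v$i * (if i = j then z else 0) = (if i = j then v$i * z else 0)" for i by simp
    show ?thesis unfolding vector_matrix_mult_def pbh_entry by (simp add: right_diff_distrib e)
  qed
  also have "\<dots> = Aop D v $ j - z * v $ j"
    unfolding Aop_def by (simp add: sum_subtractf mult.commute)
  finally show ?thesis .
qed

lemma vm_pbh_Inr: "(v v* pbh_block D H S z) $ Inr j = (if j \<in> S then pair v (column j H) else 0)"
  unfolding vector_matrix_mult_def pbh_entry pair_def column_def by simp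

lemma pbh_kalman:
  fixes D :: "real^'n^'n" and H :: "real^'l^'n"
  assumes pbh: "\<forall>z. rank (pbh_block D H S z) = CARD('n)"
  shows "span (Kr D H S) = UNIV"
proof (rule ccontr)
  assume ne: "span (Kr D H S) \<noteq> UNIV"
  have "dim (Kr D H S) \<noteq> DIM(real^'n)" using ne dim_eq_full by blast
  then have "dim (Kr D H S) < DIM(real^'n)" using dim_subset_UNIV[of "Kr D H S"] by simp
  from orthogonal_to_subspace_exists[OF this]
  obtain x :: "real^'n" where x: "x \<noteq> 0" "\<And>y. y \<in> span (Kr D H S) \<Longrightarrow> orthogonal x y"
    by blast
  define w where "w = (\<chi> i. complex_of_real (x $ i))"
  have pw: "pair w y = complex_of_real (x \<bullet> y)" for y
    unfolding pair_def w_def by (simp add: inner_vec_def of_real_sum)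
  have wW: "w \<in> Wset D H S"
    unfolding Wset_def
  proof (intro CollectI allI impI)
    fix k c assume "c \<in> S"
    then have "mat_pow D k *v column c H \<in> span (Kr D H S)" unfolding Kr_def by (intro span_base) blast
    then have "x \<bullet> (mat_pow D k *v column c H) = 0" using x(2) unfolding orthogonal_def by blast
    then show "pair w (mat_pow D k *v column c H) = 0" using pw by simp
  qed
  have w0: "w \<noteq> 0"
  proof
    assume "w = 0"
    then have "x $ i = 0" for i unfolding w_def by (metis of_real_eq_0_iff vec_lambda_beta zero_index)
    then show False using x(1) by (simp add: vec_eq_iff)
  qed
  obtain v z where v: "v \<in> Wset D H S" "v \<noteq> 0" "Aop D v = z *s v" using eig_from_W[OF wW w0] by blast
  have "v v* pbh_block D H S z = 0"
  proof (subst vec_eq_iff, intro allI)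
    fix c :: "'n + 'l"
    show "(v v* pbh_block D H S z) $ c = 0 $ c"
    proof (cases c)
      case (Inl j)
      have "Aop D v $ j = z * v $ j" using v(3) by simp
      then show ?thesis unfolding Inl vm_pbh_Inl by simp
    next
      case (Inr j)
      have "pair v (column j H) = 0" if "j \<in> S"
      proof -
        have "pair v (mat_pow D 0 *v column j H) = 0" using v(1) that unfolding Wset_def by blast
        then show ?thesis by simp
      qed
      then show ?thesis unfolding Inr vm_pbh_Inr by simp
    qed
  qed
  then have "rank (pbh_block D H S z) < CARD('n)" using rank_lt v(2) by blast
  then show False using pbh by simp
qed

lemma pair_lin: "pair v (c *\<^sub>R g + y) = complex_of_real c * pair v g + pair v y"
  unfolding pair_def by (simp add: sum.distrib sum_distrib_left algebra_simps)

lemma kalman_pbh: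
  fixes D :: "real^'n^'n" and H :: "real^'l^'n"
  assumes kal: "span (Kr D H UNIV) = UNIV"
  shows "rank (pbh_block D H UNIV z) = CARD('n)"
proof (rule rank_full)
  fix v assume vM: "v v* pbh_block D H UNIV z = 0"
  have A: "Aop D v = z *s v"
  proof (subst vec_eq_iff, intro allI)
    fix j
    have "(v v* pbh_block D H UNIV z) $ Inl j = 0" using vM by simp
    then show "Aop D v $ j = (z *s v) $ j" unfolding vm_pbh_Inl by simp
  qed
  have C: "pair v (column j H) = 0" for j
    using vM vm_pbh_Inr[of v D H UNIV z j] by simp
  have pk: "pair v (mat_pow D k *v y) = z ^ k * pair v y" for k y
  proof (induction k arbitrary: y)
    case 0 then show ?case by simp
  next
    case (Suc k)
    have "pair v (mat_pow D (Suc k) *v y) = pair v (mat_pow D k *v (D *v y))" by (simp only: mat_pow_Suc_mv')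
    also have "\<dots> = z ^ k * pair v (D *v y)" by (rule Suc)
    also have "\<dots> = z ^ k * (z * pair v y)" by (simp add: pair_D A pair_scale)
    finally show ?case by simp
  qed
  have "pair v y = 0" if "y \<in> span (Kr D H UNIV)" for y
    using that
  proof (induction rule: span_induct_alt)
    case base then show ?case unfolding pair_def by simp
  next
    case (step c g y)
    then obtain k j where "g = mat_pow D k *v column j H" unfolding Kr_def by blast
    then have "pair v g = 0" using pk C by simp
    have "pair v (c *\<^sub>R g + y) = complex_of_real c * pair v g + pair v y" by (rule pair_lin)
    then show ?case using \<open>pair v g = 0\<close> step(2) by simp
  qed
  then have "pair v (axis i 1) = 0" for i using kal by simp
  moreover have "pair v (axis i 1) = v $ i" for i
    unfolding pair_def axis_def by (simp add: if_distrib sum.delta cong: if_cong)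
  ultimately show "v = 0" by (simp add: vec_eq_iff)
qed

theorem theorem3:
  fixes D :: "real^'n^'n" and H :: "real^'l^'n" and s :: nat
  assumes "0 < s" and "s \<le> CARD('l)"
    and "sparse_controllable D H s"
  shows "real CARD('n) / real (Rstar H s) \<le> real (Kstar D H s)
       \<and> int (Kstar D H s) \<le> min (int (min_poly_degree D) * \<lceil>real (Sstar D H) / real s\<rceil>)
                                  (int CARD('n) - int (Rstar H s) + 1)
       \<and> min (int (min_poly_degree D) * \<lceil>real (Sstar D H) / real s\<rceil>)
             (int CARD('n) - int (Rstar H s) + 1) \<le> int CARD('n)"
proof -
  have s: "0 < s" by (rule assms(1))
  obtain K0 where K0: "steerable_in D H s K0" using exists_steer[OF assms(3)] by blast
  define Ks where "Ks = Kstar D H s"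
  have stK: "steerable_in D H s Ks" unfolding Ks_def Kstar_def by (rule LeastI[of "\<lambda>K. steerable_in D H s K", OF K0])
  have Kmin: "Ks \<le> K" if "steerable_in D H s K" for K
    unfolding Ks_def Kstar_def by (rule Least_le[of "\<lambda>K. steerable_in D H s K", OF that])
  define N where "N = CARD('n)"
  define R where "R = Rstar H s"
  have low: "N \<le> Ks * R" unfolding N_def R_def by (rule lower_bound[OF stK])
  have N1: "1 \<le> N" unfolding N_def by (simp add: Suc_leI)
  have R1: "1 \<le> R"
  proof (rule ccontr)
    assume "\<not> 1 \<le> R" then have "R = 0" by simp
    then show False using low N1 by simp
  qed
  have RN: "R \<le> N"
  proof -
    have "rank H \<le> CARD('n)" using rank_bound[of H] by simp
    then show ?thesis unfolding R_def N_def Rstar_def by simp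
  qed
  have up1: "Ks \<le> N + 1 - R" unfolding N_def R_def by (rule Kmin[OF upper_NR[OF s stK]])
  \<comment> \<open>Kalman rank condition for all columns\<close>
  obtain T0 where T0: "\<forall>k. card (T0 k) \<le> s" "span (gen D H T0 Ks) = UNIV"
    using steer_reach[OF stK] by blast
  have Ks0: "0 < Ks" by (rule steer_pos[OF stK])
  have kalU: "span (Kr D H UNIV) = UNIV"
  proof -
    have "gen D H T0 Ks \<subseteq> Kr D H UNIV" unfolding gen_def Kr_def by auto
    then have "span (gen D H T0 Ks) \<subseteq> span (Kr D H UNIV)" by (rule span_mono)
    then show ?thesis using T0(2) by auto
  qed
  \<comment> \<open>an optimal PBH set\<close>
  have exP: "\<exists>S. card S = card (UNIV :: 'l set) \<and> (\<forall>z. rank (pbh_block D H S z) = CARD('n))"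
    using kalman_pbh[OF kalU] by blast
  have exm: "\<exists>m. \<exists>S. card S = m \<and> (\<forall>z. rank (pbh_block D H S z) = CARD('n))" using exP by blast
  obtain S where S: "card S = Sstar D H" "\<forall>z. rank (pbh_block D H S z) = CARD('n)"
    using LeastI_ex[OF exm] unfolding Sstar_def by blast
  have kalS: "span (Kr D H S) = UNIV" by (rule pbh_kalman[OF S(2)])
  have S1: "1 \<le> Sstar D H"
  proof (rule ccontr)
    assume "\<not> 1 \<le> Sstar D H"
    then have "card S = 0" using S(1) by simp
    moreover have "finite S" by (rule finite_subset[OF subset_UNIV finite_class.finite_UNIV])
    ultimately have "S = {}" by simp
    then have "Kr D H S = {}" unfolding Kr_def by simp
    then have "span (Kr D H S) = {0}" by simp
    moreover have "(axis (undefined::'n) (1::real)) \<noteq> 0" by (simp add: axis_eq_0_iff)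
    ultimately show False using kalS by (metis UNIV_I singletonD)
  qed
  \<comment> \<open>minimal polynomial\<close>
  obtain p0 :: "real poly" where p0: "lead_coeff p0 = 1" "poly_mat p0 D = 0"
    using minpoly_exists by blast
  define q where "q = min_poly_degree D"
  have exq: "\<exists>p::real poly. lead_coeff p = 1 \<and> degree p = degree p0 \<and> poly_mat p D = 0"
    using p0 by blast
  have exd: "\<exists>d. \<exists>p::real poly. lead_coeff p = 1 \<and> degree p = d \<and> poly_mat p D = 0" using exq by blast
  obtain p :: "real poly" where p: "lead_coeff p = 1" "degree p = q" "poly_mat p D = 0"
    using LeastI_ex[OF exd] unfolding q_def min_poly_degree_def by blast
  have q1: "1 \<le> q"
  proof (rule ccontr)
    assume "\<not> 1 \<le> q"
    then have q0: "q = 0" by simp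
    then have "coeff p 0 = 1" using p(1,2) by simp
    then have "poly_mat p D = mat 1" unfolding poly_mat_def p(2) q0 by simp
    moreover have "(mat 1 :: real^'n^'n) \<noteq> 0"
    proof
      assume "(mat 1 :: real^'n^'n) = 0"
      then have "(mat 1 :: real^'n^'n) $ undefined $ undefined = 0" by simp
      then show False by (simp add: mat_def)
    qed
    ultimately show False using p(3) by simp
  qed
  \<comment> \<open>the group G0\<close>
  have genS: "gen D H T0 Ks \<subseteq> range ((*v) D) \<union> (\<lambda>c. column c H) ` T0 0"
  proof
    fix x assume "x \<in> gen D H T0 Ks"
    then obtain k c where kc: "k < Ks" "c \<in> T0 k" "x = mat_pow D k *v column c H"
      unfolding gen_def by blast
    show "x \<in> range ((*v) D) \<union> (\<lambda>c. column c H) ` T0 0"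
    proof (cases k)
      case 0 then show ?thesis using kc by simp
    next
      case (Suc k')
      then have "x = D *v (mat_pow D k' *v column c H)" using kc(3) by (simp only: mat_pow_Suc_mv)
      then show ?thesis by blast
    qed
  qed
  have codim: "N \<le> dim (range ((*v) D)) + s"
  proof -
    have "N = dim (gen D H T0 Ks)" unfolding N_def using T0(2) dim_span[of "gen D H T0 Ks"] by simp
    also have "\<dots> \<le> dim (range ((*v) D) \<union> (\<lambda>c. column c H) ` T0 0)" using genS by (rule dim_subset)
    also have "\<dots> \<le> dim (range ((*v) D)) + dim ((\<lambda>c. column c H) ` T0 0)" by (rule dim_Un_le)
    also have "dim ((\<lambda>c. column c H) ` T0 0) \<le> card ((\<lambda>c. column c H) ` T0 0)"
      by (rule dim_le_card[OF span_superset]) simp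
    also have "\<dots> \<le> card (T0 0)" by (rule card_image_le) simp
    also have "\<dots> \<le> s" using T0(1) by simp
    finally show ?thesis by simp
  qed
  have spS: "span (range ((*v) D) \<union> (\<lambda>c. column c H) ` S) = UNIV"
  proof -
    have "Kr D H S \<subseteq> range ((*v) D) \<union> (\<lambda>c. column c H) ` S"
    proof
      fix x assume "x \<in> Kr D H S"
      then obtain k c where kc: "c \<in> S" "x = mat_pow D k *v column c H" unfolding Kr_def by blast
      show "x \<in> range ((*v) D) \<union> (\<lambda>c. column c H) ` S"
      proof (cases k)
        case 0 then show ?thesis using kc by simp
      next
        case (Suc k')
        then have "x = D *v (mat_pow D k' *v column c H)" using kc(2) by (simp only: mat_pow_Suc_mv)
        then show ?thesis by blast
      qed
    qed
    then have "span (Kr D H S) \<subseteq> span (range ((*v) D) \<union> (\<lambda>c. column c H) ` S)" by (rule span_mono)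
    then show ?thesis using kalS by auto
  qed
  obtain G0 where G0: "G0 \<subseteq> S"
    "card G0 = dim (range ((*v) D) \<union> (\<lambda>c. column c H) ` S) - dim (range ((*v) D))"
    "span (range ((*v) D) \<union> (\<lambda>c. column c H) ` G0) = span (range ((*v) D) \<union> (\<lambda>c. column c H) ` S)"
    using sel_full[of S "range ((*v) D)" "\<lambda>c. column c H"] by auto
  have dimS: "dim (range ((*v) D) \<union> (\<lambda>c. column c H) ` S) = N"
    unfolding N_def using spS dim_span[of "range ((*v) D) \<union> (\<lambda>c. column c H) ` S"] by simp
  have cardG0: "card G0 \<le> s" using G0(2) dimS codim by simp
  have spG0: "span (range ((*v) D) \<union> (\<lambda>c. column c H) ` G0) = UNIV" using G0(3) spS by simp
  \<comment> \<open>number of groups\<close>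
  define c where "c = \<lceil>real (Sstar D H) / real s\<rceil>"
  define g where "g = nat c"
  have cge: "real (Sstar D H) / real s \<le> of_int c" unfolding c_def by (rule le_of_int_ceiling)
  have cpos: "0 < c"
  proof -
    have "0 < real (Sstar D H) / real s" using S1 s by simp
    then show ?thesis using cge by linarith
  qed
  have gc: "int g = c" unfolding g_def using cpos by simp
  have g1: "1 \<le> g" unfolding g_def using cpos by simp
  have Sg: "card S \<le> g * s"
  proof -
    have "real (Sstar D H) \<le> of_int c * real s" using cge s by (simp add: divide_le_eq)
    also have "\<dots> = real (g * s)" using gc by (metis of_int_of_nat_eq of_nat_mult)
    finally show ?thesis using S(1) by (simp only: of_nat_le_iff)
  qed
  have stq: "steerable_in D H s (q * g)"
    by (rule q_construct[OF s kalS G0(1) cardG0 spG0 p(1) p(3) p(2) q1 Sg g1])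
  have up2: "Ks \<le> q * g" by (rule Kmin[OF stq])
  show ?thesis
  proof (intro conjI)
    show "real CARD('n) / real (Rstar H s) \<le> real (Kstar D H s)"
    proof -
      have "real N \<le> real Ks * real R" using low by (metis of_nat_le_iff of_nat_mult)
      then show ?thesis unfolding N_def[symmetric] R_def[symmetric] Ks_def[symmetric]
        using R1 by (simp add: divide_le_eq)
    qed
    have i1: "int Ks \<le> int (min_poly_degree D) * c"
    proof -
      have "int Ks \<le> int (q * g)" using up2 by (simp only: of_nat_le_iff)
      also have "\<dots> = int q * c" using gc by (simp only: of_nat_mult)
      finally show ?thesis unfolding q_def .
    qed
    have i2: "int Ks \<le> int CARD('n) - int (Rstar H s) + 1"
      using up1 RN unfolding N_def R_def by linarith
    show "int (Kstar D H s) \<le> min (int (min_poly_degree D) * \<lceil>real (Sstar D H) / real s\<rceil>)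
                                  (int CARD('n) - int (Rstar H s) + 1)"
      using i1 i2 unfolding Ks_def c_def by simp
    show "min (int (min_poly_degree D) * \<lceil>real (Sstar D H) / real s\<rceil>)
             (int CARD('n) - int (Rstar H s) + 1) \<le> int CARD('n)"
      using R1 unfolding R_def by simp
  qed
qed


end
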